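(* For all $(\dot I_0,\dot d_0,\dot z_1,\dot z_2,\dot z_3)\in\mathbb C^5$ and $a,b,F\in\mathbb C$, the $\mathcal L$-module $M(\dot I_0,\dot d_0,\dot z_1,\dot z_2,\dot z_3)\otimes A'(a,b;F)$ is not simple.
   Context: $\mathcal{L}$ has basis $\{d_n,I_n,z_1,z_2,z_3\mid n\in\mathbb{Z}\}$ with brackets $[d_n,d_m]=(m-n)d_{m+n}+\delta_{n,-m}\frac{n^3-n}{12}z_1$, $[d_n,I_m]=mI_{m+n}+\delta_{n,-m}(n^2+n)z_2$, $[I_n,I_m]=n\delta_{n,-m}z_3$, $z_i$ central. $M(\dot I_0,\dot d_0,\dot z_1,\dot z_2,\dot z_3)=U(\mathcal L)/\mathcal I$ is the Verma module, where $\mathcal I$ is the left ideal generated by $d_n,I_n$ ($n\in\mathbb N$), $d_0-\dot d_0$, $I_0-\dot I_0$, $z_i-\dot z_i$ ($i=1,2,3$). For $a,b,F\in\mathbb C$, $A(a,b;F)=\mathbb{C}[x,x^{-1}]$ with $z_1=z_2=z_3=0$, $d_nx^m=(a+m+nb)x^{m+n}$, $I_nx^m=Fx^{m+n}$; it is simple unless $a\in\mathbb Z$, $b\in\{0,1\}$, $F=0$, and $A'(a,b;F)$ denotes its unique nontrivial simple subquotient. *)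

theory Defs
  imports Main "HOL.Complex"
begin

datatype Lb = LD int | LI int | LZ1 | LZ2 | LZ3

text \<open>brk x y z = coefficient of basis element z in [x,y].\<close>
fun brk :: "Lb \<Rightarrow> Lb \<Rightarrow> Lb \<Rightarrow> complex" where
  "brk (LD n) (LD m) = (\<lambda>z. (if z = LD (m + n) then of_int (m - n) else 0)
       + (if z = LZ1 \<and> n = - m then (of_int n ^ 3 - of_int n) / 12 else 0))"
| "brk (LD n) (LI m) = (\<lambda>z. (if z = LI (m + n) then of_int m else 0)
       + (if z = LZ2 \<and> n = - m then of_int n ^ 2 + of_int n else 0))"
| "brk (LI m) (LD n) = (\<lambda>z. - ((if z = LI (m + n) then of_int m else 0)
       + (if z = LZ2 \<and> n = - m then of_int n ^ 2 + of_int n else 0)))"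
| "brk (LI n) (LI m) = (\<lambda>z. if z = LZ3 \<and> n = - m then of_int n else 0)"
| "brk _ _ = (\<lambda>z. 0)"

section \<open>Tensor algebra T(L): finitely supported functions on words\<close>

type_synonym tel = "Lb list \<Rightarrow> complex"

definition Tfin :: "tel set" where
  "Tfin = {t. finite {w. t w \<noteq> 0}}"

definition wd :: "Lb list \<Rightarrow> tel" where
  "wd u = (\<lambda>w. if w = u then 1 else 0)"

text \<open>Concatenation product (word u means the product u!0 * u!1 * ...).\<close>
definition tmul :: "tel \<Rightarrow> tel \<Rightarrow> tel" where
  "tmul s t = (\<lambda>w. \<Sum>i\<in>{0..length w}. s (take i w) * t (drop i w))"

definition lin :: "(Lb \<Rightarrow> complex) \<Rightarrow> tel" where
  "lin c = (\<lambda>w. case w of [z] \<Rightarrow> c z | _ \<Rightarrow> 0)"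

text \<open>x y - y x - [x,y], generating the two-sided ideal K with U(L) = T(L)/K.\<close>
definition relT :: "Lb \<Rightarrow> Lb \<Rightarrow> tel" where
  "relT x y = (\<lambda>w. wd [x, y] w - wd [y, x] w - lin (brk x y) w)"

definition gens :: "complex \<Rightarrow> complex \<Rightarrow> complex \<Rightarrow> complex \<Rightarrow> complex \<Rightarrow> tel set" where
  "gens I0 d0 z1 z2 z3 =
     {wd [LD n] | n. n > 0} \<union> {wd [LI n] | n. n > 0} \<union>
     {(\<lambda>w. wd [LD 0] w - d0 * wd [] w), (\<lambda>w. wd [LI 0] w - I0 * wd [] w),
      (\<lambda>w. wd [LZ1] w - z1 * wd [] w), (\<lambda>w. wd [LZ2] w - z2 * wd [] w),
      (\<lambda>w. wd [LZ3] w - z3 * wd [] w)}"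

text \<open>Preimage in T(L) of the left ideal I of U(L): K + T(L) * gens.\<close>
inductive_set Nid :: "complex \<Rightarrow> complex \<Rightarrow> complex \<Rightarrow> complex \<Rightarrow> complex \<Rightarrow> tel set"
  for I0 d0 z1 z2 z3 where
  zero: "(\<lambda>w. 0) \<in> Nid I0 d0 z1 z2 z3"
| add: "s \<in> Nid I0 d0 z1 z2 z3 \<Longrightarrow> t \<in> Nid I0 d0 z1 z2 z3 \<Longrightarrow> (\<lambda>w. s w + t w) \<in> Nid I0 d0 z1 z2 z3"
| scale: "s \<in> Nid I0 d0 z1 z2 z3 \<Longrightarrow> (\<lambda>w. c * s w) \<in> Nid I0 d0 z1 z2 z3"
| rel: "tmul (tmul (wd u) (relT x y)) (wd v) \<in> Nid I0 d0 z1 z2 z3"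
| gen: "g \<in> gens I0 d0 z1 z2 z3 \<Longrightarrow> tmul (wd u) g \<in> Nid I0 d0 z1 z2 z3"

section \<open>A'(a,b;F): basis x^m, m in Sset, action projected to Sset\<close>

definition Sset :: "complex \<Rightarrow> complex \<Rightarrow> complex \<Rightarrow> int set" where
  "Sset a b F = (if a \<in> \<int> \<and> (b = 0 \<or> b = 1) \<and> F = 0
                 then {m. of_int m + a \<noteq> 0} else UNIV)"

section \<open>T(L) \<otimes> A'(a,b;F) as finitely supported maps Sset \<rightarrow> T(L)\<close>

type_synonym vel = "int \<Rightarrow> tel"

definition Vsp :: "complex \<Rightarrow> complex \<Rightarrow> complex \<Rightarrow> vel set" where
  "Vsp a b F = {f. finite {m. f m \<noteq> (\<lambda>w. 0)} \<and> (\<forall>m. f m \<in> Tfin)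
                  \<and> (\<forall>m. m \<notin> Sset a b F \<longrightarrow> f m = (\<lambda>w. 0))}"

text \<open>e.(t \<otimes> x^k) = (e t) \<otimes> x^k + t \<otimes> (e x^k), with z_i acting by 0 on A'.\<close>
definition actV :: "complex \<Rightarrow> complex \<Rightarrow> complex \<Rightarrow> Lb \<Rightarrow> vel \<Rightarrow> vel" where
  "actV a b F e f = (\<lambda>m w. tmul (wd [e]) (f m) w +
      (if m \<in> Sset a b F then
         (case e of LD n \<Rightarrow> (a + of_int (m - n) + of_int n * b) * f (m - n) w
                  | LI n \<Rightarrow> F * f (m - n) w
                  | _ \<Rightarrow> 0)
       else 0))"

definition Nsub :: "complex \<Rightarrow> complex \<Rightarrow> complex \<Rightarrow> complex \<Rightarrow> complex \<Rightarrow>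
                    complex \<Rightarrow> complex \<Rightarrow> complex \<Rightarrow> vel set" where
  "Nsub I0 d0 z1 z2 z3 a b F = {f \<in> Vsp a b F. \<forall>m. f m \<in> Nid I0 d0 z1 z2 z3}"

section \<open>The quotient M \<otimes> A' = (T(L) \<otimes> A') / (N \<otimes> A') as a set of cosets\<close>

definition qcl :: "complex \<Rightarrow> complex \<Rightarrow> complex \<Rightarrow> complex \<Rightarrow> complex \<Rightarrow>
                    complex \<Rightarrow> complex \<Rightarrow> complex \<Rightarrow> vel \<Rightarrow> vel set" where
  "qcl I0 d0 z1 z2 z3 a b F f =
     {g \<in> Vsp a b F. (\<lambda>m w. g m w - f m w) \<in> Nsub I0 d0 z1 z2 z3 a b F}"

definition Wcar where
  "Wcar I0 d0 z1 z2 z3 a b F = qcl I0 d0 z1 z2 z3 a b F ` Vsp a b F"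
definition Wzero where
  "Wzero I0 d0 z1 z2 z3 a b F = qcl I0 d0 z1 z2 z3 a b F (\<lambda>m w. 0)"
definition Wadd where
  "Wadd I0 d0 z1 z2 z3 a b F X Y =
     qcl I0 d0 z1 z2 z3 a b F (\<lambda>m w. (SOME x. x \<in> X) m w + (SOME y. y \<in> Y) m w)"
definition Wscale where
  "Wscale I0 d0 z1 z2 z3 a b F c X =
     qcl I0 d0 z1 z2 z3 a b F (\<lambda>m w. c * (SOME x. x \<in> X) m w)"
definition Wact where
  "Wact I0 d0 z1 z2 z3 a b F e X =
     qcl I0 d0 z1 z2 z3 a b F (actV a b F e (SOME x. x \<in> X))"

definition submod :: "'v set \<Rightarrow> 'v \<Rightarrow> ('v \<Rightarrow> 'v \<Rightarrow> 'v) \<Rightarrow> (complex \<Rightarrow> 'v \<Rightarrow> 'v)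
                       \<Rightarrow> (Lb \<Rightarrow> 'v \<Rightarrow> 'v) \<Rightarrow> 'v set \<Rightarrow> bool" where
  "submod C z ad sc ac U \<longleftrightarrow> U \<subseteq> C \<and> z \<in> U \<and> (\<forall>x\<in>U. \<forall>y\<in>U. ad x y \<in> U)
      \<and> (\<forall>c. \<forall>x\<in>U. sc c x \<in> U) \<and> (\<forall>e. \<forall>x\<in>U. ac e x \<in> U)"

definition simple_mod :: "'v set \<Rightarrow> 'v \<Rightarrow> ('v \<Rightarrow> 'v \<Rightarrow> 'v) \<Rightarrow> (complex \<Rightarrow> 'v \<Rightarrow> 'v)
                       \<Rightarrow> (Lb \<Rightarrow> 'v \<Rightarrow> 'v) \<Rightarrow> bool" where
  "simple_mod C z ad sc ac \<longleftrightarrow> C \<noteq> {z} \<and>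
      (\<forall>U. submod C z ad sc ac U \<longrightarrow> U = {z} \<or> U = C)"

end

theory Submission
  imports Defs
begin


fun neg :: "Lb \<Rightarrow> bool" where
  "neg (LD n) = (n < 0)" | "neg (LI n) = (n < 0)" | "neg _ = False"

fun bl :: "Lb \<Rightarrow> Lb \<Rightarrow> (complex \<times> Lb) list" where
  "bl (LD n) (LD m) = [(of_int (m - n), LD (m + n)), (if n = - m then (of_int n ^ 3 - of_int n) / 12 else 0, LZ1)]"
| "bl (LD n) (LI m) = [(of_int m, LI (m + n)), (if n = - m then of_int n ^ 2 + of_int n else 0, LZ2)]"
| "bl (LI m) (LD n) = [(- of_int m, LI (m + n)), (if n = - m then - (of_int n ^ 2 + of_int n) else 0, LZ2)]"
| "bl (LI n) (LI m) = [(if n = - m then of_int n else 0, LZ3)]"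
| "bl _ _ = []"

definition fs :: "(complex \<times> 'w) list \<Rightarrow> ('w \<Rightarrow> complex) \<Rightarrow> complex" where
  "fs cs \<phi> = sum_list (map (\<lambda>(c,w). c * \<phi> w) cs)"

definition der :: "Lb \<Rightarrow> Lb list \<Rightarrow> (complex \<times> Lb list) list" where
  "der e t = concat (map (\<lambda>i. map (\<lambda>(c,z). (c, t[i:=z])) (bl e (t!i))) [0..<length t])"

lemma der_len: "(c,w) \<in> set (der e t) \<Longrightarrow> length w = length t"
  by (auto simp: der_def)

lemma brk_bl: "brk x y z = sum_list (map (\<lambda>(c,w). if w = z then c else 0) (bl x y))"
  by (cases x; cases y; auto)

locale P =
  fixes I0 d0 z1 z2 z3 a b Fp :: complex and k :: int
begin

fun chi :: "Lb \<Rightarrow> complex" where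
  "chi (LD n) = (if n = 0 then d0 else 0)"
| "chi (LI n) = (if n = 0 then I0 else 0)"
| "chi LZ1 = z1" | "chi LZ2 = z2" | "chi LZ3 = z3"

definition mk :: "(int \<Rightarrow> complex) \<Rightarrow> int \<Rightarrow> complex" where
  "mk y j = (if j \<in> Sset a b Fp then y j else 0)"

definition Am :: "Lb \<Rightarrow> (int \<Rightarrow> complex) \<Rightarrow> int \<Rightarrow> complex" where
  "Am e y = (\<lambda>m. if m \<in> Sset a b Fp then (case e of LD n \<Rightarrow> (a + of_int (m - n) + of_int n * b) * mk y (m - n)
        | LI n \<Rightarrow> Fp * mk y (m - n) | _ \<Rightarrow> 0) else 0)"

function H :: "Lb list \<Rightarrow> (int \<Rightarrow> complex) \<Rightarrow> complex" where
  "H [] y = y (k - 1)"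
| "H (e # t) y = (if neg e then - H t (Am e y)
     else chi e * H t y + sum_list (map (\<lambda>(c,w). c * H w y) (der e t)))"
  by pat_completeness auto
termination
  by (relation "measure (\<lambda>(t,y). length t)") (auto dest: der_len)

end

lemma fs_Nil[simp]: "fs [] \<phi> = 0" by (simp add: fs_def)
lemma fs_Cons[simp]: "fs ((c,w)#cs) \<phi> = c * \<phi> w + fs cs \<phi>" by (simp add: fs_def)
lemma fs_append[simp]: "fs (xs @ ys) \<phi> = fs xs \<phi> + fs ys \<phi>" by (simp add: fs_def)

lemma int_sum_neg: "((a::int) + b = - c) = (c = - a - b)" by auto

lemma antisym_bl: "fs (bl y x) \<phi> = - fs (bl x y) \<phi>"
  by (cases x; cases y) (auto simp: algebra_simps power2_eq_square power3_eq_cube diff_divide_distrib add_divide_distrib)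

lemma jacobi:
  "fs (bl y w) (\<lambda>z. fs (bl x z) \<phi>) - fs (bl x w) (\<lambda>z. fs (bl y z) \<phi>)
   = fs (bl x y) (\<lambda>z. fs (bl z w) \<phi>)"
  apply (cases x; cases y; cases w)
  apply (auto simp: int_sum_neg)
  apply (auto simp: algebra_simps power2_eq_square power3_eq_cube diff_divide_distrib add_divide_distrib)
  done


context P begin

lemma Sset_cases:
  "Sset a b Fp = UNIV \<or> (\<exists>p. a = of_int p \<and> (b = 0 \<or> b = 1) \<and> Fp = 0 \<and> Sset a b Fp = {m. m \<noteq> - p})"
proof (cases "a \<in> \<int> \<and> (b = 0 \<or> b = 1) \<and> Fp = 0")
  case True
  then obtain p where p: "a = of_int p" by (auto elim: Ints_cases)
  have "(of_int m + a \<noteq> 0) = (m \<noteq> - p)" for m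
  proof -
    have "(of_int m + a = 0) = (of_int (m + p) = (0::complex))" by (simp add: p)
    also have "\<dots> = (m = - p)" by (simp only: of_int_eq_0_iff) linarith
    finally show ?thesis by simp
  qed
  then show ?thesis using True p by (auto simp: Sset_def)
qed (auto simp: Sset_def)

lemma amod: "Am x (Am y y0) m - Am y (Am x y0) m = fs (bl x y) (\<lambda>z. Am z y0 m)"
  using Sset_cases
proof
  assume S: "Sset a b Fp = UNIV"
  show ?thesis
    unfolding Am_def mk_def S by (cases x; cases y) (auto simp: algebra_simps)
next
  assume "\<exists>p. a = of_int p \<and> (b = 0 \<or> b = 1) \<and> Fp = 0 \<and> Sset a b Fp = {m. m \<noteq> - p}"
  then obtain p where p: "a = of_int p" "b = 0 \<or> b = 1" "Fp = 0" "Sset a b Fp = {m. m \<noteq> - p}" by blast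
  show ?thesis using p(2) unfolding Am_def mk_def p(4)
    by (cases x; cases y) (auto simp: p(1,3) algebra_simps)
qed

end


lemma fs_cong: "(\<And>c w. (c,w) \<in> set cs \<Longrightarrow> \<phi> w = \<psi> w) \<Longrightarrow> fs cs \<phi> = fs cs \<psi>"
proof (induction cs)
  case (Cons p cs)
  then show ?case by (cases p) (simp, metis list.set_intros)
qed simp

lemma fs_map[simp]: "fs (map (\<lambda>(c,w). (c, f w)) cs) \<phi> = fs cs (\<lambda>w. \<phi> (f w))"
  by (induction cs) auto

lemma fs_map_comp[simp]: "fs (map ((\<lambda>(c,w). (c, f w)) \<circ> (\<lambda>(c,w). (c, g w))) cs) \<phi> = fs cs (\<lambda>w. \<phi> (f (g w)))"
  by (induction cs) auto

lemma fs_lin: "fs cs (\<lambda>w. r * \<phi> w + \<psi> w) = r * fs cs \<phi> + fs cs \<psi>"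
  by (induction cs) (auto simp: algebra_simps)

lemma fs_add: "fs cs (\<lambda>w. \<phi> w + \<psi> w) = fs cs \<phi> + fs cs \<psi>"
  using fs_lin[of cs 1] by simp

lemma fs_diff: "fs cs (\<lambda>w. \<phi> w - \<psi> w) = fs cs \<phi> - fs cs \<psi>"
  by (induction cs) (auto simp: algebra_simps)

lemma fs_neg: "fs cs (\<lambda>w. - \<phi> w) = - fs cs \<phi>"
  by (induction cs) (auto simp: algebra_simps)

lemma fs_mult: "fs cs (\<lambda>w. r * \<phi> w) = r * fs cs \<phi>"
  by (induction cs) (auto simp: algebra_simps)

lemma fs_mult2: "fs cs (\<lambda>w. \<phi> w * r) = fs cs \<phi> * r"
  by (induction cs) (auto simp: algebra_simps)

lemma fs_zero[simp]: "fs cs (\<lambda>w. 0) = 0"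
  by (induction cs) auto

lemma fs_swap: "fs A (\<lambda>z. fs B (\<lambda>w. f z w)) = fs B (\<lambda>w. fs A (\<lambda>z. f z w))"
  by (induction A) (auto simp: fs_lin)

lemma der_Nil[simp]: "der e [] = []" by (simp add: der_def)

lemma der_Cons: "der e (a # t) = map (\<lambda>(c,z). (c, z # t)) (bl e a) @ map (\<lambda>(c,w). (c, a # w)) (der e t)"
proof -
  have "[0..<length (a#t)] = 0 # map Suc [0..<length t]"
    by (simp add: upt_conv_Cons map_Suc_upt del: upt_Suc)
  then show ?thesis
    by (simp add: der_def map_concat comp_def case_prod_unfold)
qed

lemma der_append: "der e (u @ v) = map (\<lambda>(c,w). (c, w @ v)) (der e u) @ map (\<lambda>(c,w). (c, u @ w)) (der e v)"
  by (induction u) (auto simp: der_Cons map_concat comp_def case_prod_unfold)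

lemma der_single: "der e [x] = map (\<lambda>(c,z). (c, [z])) (bl e x)"
  by (simp add: der_Cons)

lemma bl_pos: "\<not> neg x \<Longrightarrow> \<not> neg y \<Longrightarrow> (c,z) \<in> set (bl x y) \<Longrightarrow> \<not> neg z"
  by (cases x; cases y) auto


context P begin

lemma nn0: "\<not> (i::int) < 0 \<Longrightarrow> \<not> j < 0 \<Longrightarrow> (i + j = 0) = (i = 0 \<and> j = 0)" by auto

lemma chi_char: "\<not> neg x \<Longrightarrow> \<not> neg y \<Longrightarrow> fs (bl x y) chi = 0"
  by (cases x; cases y) (auto simp: nn0)

lemma H_neg: "neg e \<Longrightarrow> H (e # t) y = - H t (Am e y)" by simp

lemma H_pos: "\<not> neg e \<Longrightarrow> H (e # t) y = chi e * H t y + fs (der e t) (\<lambda>w. H w y)"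
  by (simp add: fs_def)

declare H.simps(2)[simp del]

lemma Am_lin: "Am e (\<lambda>m. c * y m + y' m) = (\<lambda>m. c * Am e y m + Am e y' m)"
  by (rule ext) (auto simp: Am_def mk_def algebra_simps split: Lb.split)

lemma H_lin: "H t (\<lambda>m. c * y m + y' m) = c * H t y + H t y'"
proof (induction "length t" arbitrary: t y y' rule: less_induct)
  case less
  show ?case
  proof (cases t)
    case Nil then show ?thesis by simp
  next
    case (Cons e t')
    show ?thesis
    proof (cases "neg e")
      case True
      have "H t' (Am e (\<lambda>m. c * y m + y' m)) = c * H t' (Am e y) + H t' (Am e y')"
        unfolding Am_lin using less[of t'] Cons by simp
      then show ?thesis using True Cons by (simp add: H_neg algebra_simps)
    next
      case False
      have "fs (der e t') (\<lambda>w. H w (\<lambda>m. c * y m + y' m)) = fs (der e t') (\<lambda>w. c * H w y + H w y')"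
        by (rule fs_cong, rule less(1)) (auto simp: Cons dest: der_len)
      then show ?thesis using False less[of t'] Cons by (simp add: H_pos fs_add fs_mult algebra_simps)
    qed
  qed
qed

lemma H_zero[simp]: "H t (\<lambda>m. 0) = 0"
  using H_lin[of t 1 "\<lambda>m. 0" "\<lambda>m. 0"] by simp

lemma H_scale: "H t (\<lambda>m. c * y m) = c * H t y"
  using H_lin[of t c y "\<lambda>m. 0"] by simp

lemma H_add: "H t (\<lambda>m. y m + y' m) = H t y + H t y'"
  using H_lin[of t 1 y y'] by simp

lemma H_fs: "H t (\<lambda>m. fs cs (\<lambda>z. Y z m)) = fs cs (\<lambda>z. H t (Y z))"
proof (induction cs)
  case (Cons p cs)
  obtain c z where "p = (c,z)" by force
  then show ?case using Cons H_lin[of t c "Y z" "\<lambda>m. fs cs (\<lambda>z. Y z m)"] by simp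
qed simp

lemma H_snoc: "\<not> neg e \<Longrightarrow> H (u @ [e]) y = chi e * H u y"
proof (induction "length u" arbitrary: u e y rule: less_induct)
  case less
  show ?case
  proof (cases u)
    case Nil then show ?thesis using less by (simp add: H_pos)
  next
    case (Cons e' u')
    show ?thesis
    proof (cases "neg e'")
      case True
      then show ?thesis using less(1)[of u'] less(2) Cons by (simp add: H_neg)
    next
      case False
      have 1: "fs (der e' u') (\<lambda>w. H (w @ [e]) y) = chi e * fs (der e' u') (\<lambda>w. H w y)"
        unfolding fs_mult[symmetric]
        by (rule fs_cong, rule less(1)) (auto simp: Cons less(2) dest: der_len)
      have 2: "fs (bl e' e) (\<lambda>z. H (u' @ [z]) y) = fs (bl e' e) (\<lambda>z. chi z * H u' y)"
        by (rule fs_cong, rule less(1)) (auto simp: Cons dest: bl_pos[OF False less(2)])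
      have 3: "fs (bl e' e) (\<lambda>z. chi z * H u' y) = 0"
        using fs_mult2[of "bl e' e" chi "H u' y"] chi_char[OF False less(2)] by simp
      show ?thesis using False Cons less(1)[of u'] less(2) 1 2 3
        by (simp add: H_pos der_append der_single algebra_simps)
    qed
  qed
qed

end


lemma fs_cong2: "(\<And>c w. (c,w) \<in> set cs \<Longrightarrow> c * \<phi> w = c * \<psi> w) \<Longrightarrow> fs cs \<phi> = fs cs \<psi>"
proof (induction cs)
  case (Cons p cs)
  obtain c w where p: "p = (c,w)" by force
  have "c * \<phi> w = c * \<psi> w" using Cons.prems p by auto
  moreover have "fs cs \<phi> = fs cs \<psi>" using Cons by auto
  ultimately show ?case by (simp add: p)
qed simp

lemma bl_neg: "neg x \<Longrightarrow> neg y \<Longrightarrow> (c,z) \<in> set (bl x y) \<Longrightarrow> neg z \<or> c = 0"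
  by (cases x; cases y) auto

lemma der_comm:
  "fs (der y w) (\<lambda>w'. fs (der x w') \<phi>) - fs (der x w) (\<lambda>w'. fs (der y w') \<phi>)
   = fs (bl x y) (\<lambda>z. fs (der z w) \<phi>)"
proof (induction w arbitrary: \<phi>)
  case Nil then show ?case by simp
next
  case (Cons a t)
  have J: "fs (bl y a) (\<lambda>z. fs (bl x z) (\<lambda>z'. \<phi> (z' # t))) - fs (bl x a) (\<lambda>z. fs (bl y z) (\<lambda>z'. \<phi> (z' # t)))
      = fs (bl x y) (\<lambda>z. fs (bl z a) (\<lambda>z'. \<phi> (z' # t)))" by (rule jacobi)
  have IH: "fs (der y t) (\<lambda>w'. fs (der x w') (\<lambda>w. \<phi> (a # w))) - fs (der x t) (\<lambda>w'. fs (der y w') (\<lambda>w. \<phi> (a # w)))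
      = fs (bl x y) (\<lambda>z. fs (der z t) (\<lambda>w. \<phi> (a # w)))" by (rule Cons)
  have S1: "fs (bl y a) (\<lambda>z. fs (der x t) (\<lambda>w. \<phi> (z # w))) = fs (der x t) (\<lambda>w. fs (bl y a) (\<lambda>z. \<phi> (z # w)))"
    by (rule fs_swap)
  have S2: "fs (bl x a) (\<lambda>z. fs (der y t) (\<lambda>w. \<phi> (z # w))) = fs (der y t) (\<lambda>w. fs (bl x a) (\<lambda>z. \<phi> (z # w)))"
    by (rule fs_swap)
  show ?case
    using J IH S1 S2
    by (simp add: der_Cons fs_add fs_diff[symmetric] algebra_simps)
qed

context P begin

lemma H_diff: "H t (\<lambda>m. y m - y' m) = H t y - H t y'"
  using H_lin[of t "-1" y' y] by simp

lemma H_x_Cons: "\<not> neg x \<Longrightarrow> H (x # y # v) y0 = chi x * H (y # v) y0 + fs (bl x y) (\<lambda>z. H (z # v) y0) + fs (der x v) (\<lambda>w. H (y # w) y0)"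
proof -
  assume a: "\<not> neg x"
  have "H (x#y#v) y0 = chi x * H (y#v) y0 + fs (der x (y#v)) (\<lambda>w. H w y0)" by (rule H_pos[OF a])
  then show ?thesis by (simp add: der_Cons algebra_simps)
qed

lemma H_rel_base: "H (x # y # v) y0 - H (y # x # v) y0 = fs (bl x y) (\<lambda>z. H (z # v) y0)"
proof -
  have pn: "H (x # y # v) y0 - H (y # x # v) y0 = fs (bl x y) (\<lambda>z. H (z # v) y0)"
    if "\<not> neg x" "neg y" for x y
  proof -
    have 1: "fs (der x v) (\<lambda>w. H (y # w) y0) = - fs (der x v) (\<lambda>w. H w (Am y y0))"
      using that by (simp add: H_neg fs_neg)
    have 2: "H (y # x # v) y0 = - (chi x * H v (Am y y0) + fs (der x v) (\<lambda>w. H w (Am y y0)))"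
      using that by (simp only: H_neg[OF that(2)] H_pos[OF that(1)])
    have 3: "H (y # v) y0 = - H v (Am y y0)" using that by (simp only: H_neg)
    show ?thesis using 1 2 3 H_x_Cons[OF that(1), of y v y0] by algebra
  qed
  show ?thesis
  proof (cases "neg x")
    case True
    show ?thesis
    proof (cases "neg y")
      case True
      have "fs (bl x y) (\<lambda>z. H (z # v) y0) = fs (bl x y) (\<lambda>z. - H v (Am z y0))"
      proof (rule fs_cong2)
        fix c z assume "(c, z) \<in> set (bl x y)"
        then have "neg z \<or> c = 0" using bl_neg[OF \<open>neg x\<close> True] by blast
        then show "c * H (z # v) y0 = c * - H v (Am z y0)" by (auto simp: H_neg)
      qed
      also have "\<dots> = - H v (\<lambda>m. fs (bl x y) (\<lambda>z. Am z y0 m))"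
        by (simp add: fs_neg H_fs)
      also have "\<dots> = - H v (\<lambda>m. Am x (Am y y0) m - Am y (Am x y0) m)"
        by (simp add: amod)
      finally show ?thesis using \<open>neg x\<close> True by (simp add: H_neg H_diff)
    next
      case False
      have "H (y # x # v) y0 - H (x # y # v) y0 = fs (bl y x) (\<lambda>z. H (z # v) y0)"
        by (rule pn) (use False True in auto)
      moreover have "fs (bl y x) (\<lambda>z. H (z # v) y0) = - fs (bl x y) (\<lambda>z. H (z # v) y0)"
        by (rule antisym_bl)
      ultimately show ?thesis by algebra
    qed
  next
    case False
    show ?thesis
    proof (cases "neg y")
      case True then show ?thesis using pn False by blast
    next
      case Fy: False
      have E1: "fs (der x v) (\<lambda>w. H (y # w) y0) = chi y * fs (der x v) (\<lambda>w. H w y0) + fs (der x v) (\<lambda>w. fs (der y w) (\<lambda>w'. H w' y0))"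
        using Fy by (simp add: H_pos fs_add fs_mult)
      have E2: "fs (der y v) (\<lambda>w. H (x # w) y0) = chi x * fs (der y v) (\<lambda>w. H w y0) + fs (der y v) (\<lambda>w. fs (der x w) (\<lambda>w'. H w' y0))"
        using False by (simp add: H_pos fs_add fs_mult)
      have C: "fs (der y v) (\<lambda>w. fs (der x w) (\<lambda>w'. H w' y0)) - fs (der x v) (\<lambda>w. fs (der y w) (\<lambda>w'. H w' y0))
        = fs (bl x y) (\<lambda>z. fs (der z v) (\<lambda>w. H w y0))" by (rule der_comm)
      have S: "fs (bl x y) (\<lambda>z. H (z # v) y0) = fs (bl x y) (\<lambda>z. chi z * H v y0 + fs (der z v) (\<lambda>w. H w y0))"
        by (rule fs_cong) (use bl_pos[OF False Fy] in \<open>auto simp: H_pos\<close>)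
      have S2: "fs (bl x y) (\<lambda>z. chi z * H v y0 + fs (der z v) (\<lambda>w. H w y0)) = fs (bl x y) (\<lambda>z. fs (der z v) (\<lambda>w. H w y0))"
        using chi_char[OF False Fy] by (simp add: fs_add fs_mult2)
      have A: "fs (bl y x) (\<lambda>z. H (z # v) y0) = - fs (bl x y) (\<lambda>z. H (z # v) y0)" by (rule antisym_bl)
      have H1: "H (y # v) y0 = chi y * H v y0 + fs (der y v) (\<lambda>w. H w y0)" using Fy by (rule H_pos)
      have H2: "H (x # v) y0 = chi x * H v y0 + fs (der x v) (\<lambda>w. H w y0)" using False by (rule H_pos)
      show ?thesis using H_x_Cons[OF False, of y v y0] H_x_Cons[OF Fy, of x v y0] E1 E2 C S S2 A H1 H2
        by algebra
    qed
  qed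
qed

end

context P begin

lemma H_pos_app: "\<not> neg e \<Longrightarrow> H (e # u' @ x # y # v) y0 = chi e * H (u' @ x # y # v) y0
   + fs (der e u') (\<lambda>w. H (w @ x # y # v) y0) + fs (bl e x) (\<lambda>z. H (u' @ z # y # v) y0)
   + fs (bl e y) (\<lambda>z. H (u' @ x # z # v) y0) + fs (der e v) (\<lambda>w. H (u' @ x # y # w) y0)"
proof -
  assume a: "\<not> neg e"
  have "H (e # u' @ x # y # v) y0 = chi e * H (u' @ x # y # v) y0 + fs (der e (u' @ x # y # v)) (\<lambda>w. H w y0)"
    by (rule H_pos[OF a])
  then show ?thesis by (simp add: der_append der_Cons algebra_simps del: map_map)
qed

lemma H_pos_app1: "\<not> neg e \<Longrightarrow> H (e # u' @ z # v) y0 = chi e * H (u' @ z # v) y0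
   + fs (der e u') (\<lambda>w. H (w @ z # v) y0) + fs (bl e z) (\<lambda>z'. H (u' @ z' # v) y0)
   + fs (der e v) (\<lambda>w. H (u' @ z # w) y0)"
proof -
  assume a: "\<not> neg e"
  have "H (e # u' @ z # v) y0 = chi e * H (u' @ z # v) y0 + fs (der e (u' @ z # v)) (\<lambda>w. H w y0)"
    by (rule H_pos[OF a])
  then show ?thesis by (simp add: der_append der_Cons algebra_simps del: map_map)
qed

lemma H_rel: "H (u @ x # y # v) y0 - H (u @ y # x # v) y0 = fs (bl x y) (\<lambda>z. H (u @ z # v) y0)"
proof (induction "length u" arbitrary: u x y v y0 rule: less_induct)
  case less
  show ?case
  proof (cases u)
    case Nil then show ?thesis using H_rel_base by simp
  next
    case (Cons e u')
    have IH: "\<And>x y v y0. H (u' @ x # y # v) y0 - H (u' @ y # x # v) y0 = fs (bl x y) (\<lambda>z. H (u' @ z # v) y0)"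
      using less Cons by simp
    show ?thesis
    proof (cases "neg e")
      case True
      have "H (e # u' @ x # y # v) y0 - H (e # u' @ y # x # v) y0 = - (H (u' @ x # y # v) (Am e y0) - H (u' @ y # x # v) (Am e y0))"
        using True by (simp add: H_neg)
      also have "\<dots> = - fs (bl x y) (\<lambda>z. H (u' @ z # v) (Am e y0))" by (simp add: IH)
      also have "\<dots> = fs (bl x y) (\<lambda>z. H (e # u' @ z # v) y0)"
        using True by (simp add: H_neg fs_neg)
      finally show ?thesis using Cons by simp
    next
      case False
      have IHw: "\<And>w x y v y0. length w = length u' \<Longrightarrow> H (w @ x # y # v) y0 - H (w @ y # x # v) y0 = fs (bl x y) (\<lambda>z. H (w @ z # v) y0)"
        using less Cons by simp
      have B: "fs (der e u') (\<lambda>w. H (w @ x # y # v) y0) - fs (der e u') (\<lambda>w. H (w @ y # x # v) y0)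
          = fs (bl x y) (\<lambda>z. fs (der e u') (\<lambda>w. H (w @ z # v) y0))"
        unfolding fs_diff[symmetric] fs_swap[of "bl x y"]
        by (rule fs_cong, rule IHw) (auto dest: der_len)
      have C: "fs (der e v) (\<lambda>w. H (u' @ x # y # w) y0) - fs (der e v) (\<lambda>w. H (u' @ y # x # w) y0)
          = fs (bl x y) (\<lambda>z. fs (der e v) (\<lambda>w. H (u' @ z # w) y0))"
        unfolding fs_diff[symmetric] fs_swap[of "bl x y"] by (simp add: IH)
      have D1: "fs (bl e x) (\<lambda>z. H (u' @ z # y # v) y0) - fs (bl e x) (\<lambda>z. H (u' @ y # z # v) y0)
          = fs (bl e x) (\<lambda>z. fs (bl z y) (\<lambda>z'. H (u' @ z' # v) y0))"
        unfolding fs_diff[symmetric] by (simp add: IH)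
      have D2: "fs (bl e y) (\<lambda>z. H (u' @ x # z # v) y0) - fs (bl e y) (\<lambda>z. H (u' @ z # x # v) y0)
          = fs (bl e y) (\<lambda>z. fs (bl x z) (\<lambda>z'. H (u' @ z' # v) y0))"
        unfolding fs_diff[symmetric] by (simp add: IH)
      have J: "fs (bl x y) (\<lambda>z. fs (bl e z) (\<lambda>z'. H (u' @ z' # v) y0)) - fs (bl e y) (\<lambda>z. fs (bl x z) (\<lambda>z'. H (u' @ z' # v) y0))
          = fs (bl e x) (\<lambda>z. fs (bl z y) (\<lambda>z'. H (u' @ z' # v) y0))"
        by (rule jacobi)
      have R: "fs (bl x y) (\<lambda>z. H (e # u' @ z # v) y0) = chi e * fs (bl x y) (\<lambda>z. H (u' @ z # v) y0)
          + fs (bl x y) (\<lambda>z. fs (der e u') (\<lambda>w. H (w @ z # v) y0))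
          + fs (bl x y) (\<lambda>z. fs (bl e z) (\<lambda>z'. H (u' @ z' # v) y0))
          + fs (bl x y) (\<lambda>z. fs (der e v) (\<lambda>w. H (u' @ z # w) y0))"
        by (simp only: H_pos_app1[OF False] fs_add fs_mult)
      have A: "H (u' @ x # y # v) y0 - H (u' @ y # x # v) y0 = fs (bl x y) (\<lambda>z. H (u' @ z # v) y0)"
        by (rule IH)
      show ?thesis
        using H_pos_app[OF False, of u' x y v y0] H_pos_app[OF False, of u' y x v y0] R Cons
          A[unfolded diff_eq_eq] B[unfolded diff_eq_eq] C[unfolded diff_eq_eq] D1[unfolded diff_eq_eq]
          D2[unfolded diff_eq_eq] J[unfolded diff_eq_eq]
        by (simp add: algebra_simps)
    qed
  qed
qed

end


definition Lw :: "tel \<Rightarrow> (Lb list \<Rightarrow> complex) \<Rightarrow> complex" where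
  "Lw t \<phi> = (\<Sum>w\<in>{w. t w \<noteq> 0}. t w * \<phi> w)"

lemma Lw_superset: "finite A \<Longrightarrow> {w. t w \<noteq> 0} \<subseteq> A \<Longrightarrow> Lw t \<phi> = (\<Sum>w\<in>A. t w * \<phi> w)"
  unfolding Lw_def by (rule sum.mono_neutral_left) auto

lemma Lw_add: "s \<in> Tfin \<Longrightarrow> t \<in> Tfin \<Longrightarrow> Lw (\<lambda>w. s w + t w) \<phi> = Lw s \<phi> + Lw t \<phi>"
proof -
  assume s: "s \<in> Tfin" and t: "t \<in> Tfin"
  let ?A = "{w. s w \<noteq> 0} \<union> {w. t w \<noteq> 0}"
  have f: "finite ?A" using s t by (simp add: Tfin_def)
  have "Lw (\<lambda>w. s w + t w) \<phi> = (\<Sum>w\<in>?A. (s w + t w) * \<phi> w)"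
    by (rule Lw_superset[OF f]) auto
  also have "\<dots> = (\<Sum>w\<in>?A. s w * \<phi> w) + (\<Sum>w\<in>?A. t w * \<phi> w)"
    by (simp add: distrib_right sum.distrib)
  also have "\<dots> = Lw s \<phi> + Lw t \<phi>"
    using Lw_superset[OF f, of s \<phi>] Lw_superset[OF f, of t \<phi>] by auto
  finally show ?thesis .
qed

lemma Lw_scale: "Lw (\<lambda>w. c * t w) \<phi> = c * Lw t \<phi>"
  by (cases "c = 0") (simp_all add: Lw_def sum_distrib_left mult.assoc)

lemma Lw_zero[simp]: "Lw (\<lambda>w. 0) \<phi> = 0" by (simp add: Lw_def)

lemma Lw_wd: "Lw (wd u) \<phi> = \<phi> u"
proof -
  have "{w. wd u w \<noteq> 0} = {u}" by (auto simp: wd_def)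
  then show ?thesis by (simp add: Lw_def wd_def)
qed

lemma Tfin_add: "s \<in> Tfin \<Longrightarrow> t \<in> Tfin \<Longrightarrow> (\<lambda>w. s w + t w) \<in> Tfin"
proof -
  assume "s \<in> Tfin" "t \<in> Tfin"
  then have "finite ({w. s w \<noteq> 0} \<union> {w. t w \<noteq> 0})" by (simp add: Tfin_def)
  moreover have "{w. s w + t w \<noteq> 0} \<subseteq> {w. s w \<noteq> 0} \<union> {w. t w \<noteq> 0}" by auto
  ultimately show ?thesis unfolding Tfin_def using finite_subset by blast
qed

lemma Tfin_scale: "t \<in> Tfin \<Longrightarrow> (\<lambda>w. c * t w) \<in> Tfin"
  unfolding Tfin_def by (rule CollectI, rule finite_subset[of _ "{w. t w \<noteq> 0}"]) auto

lemma Tfin_wd: "wd u \<in> Tfin"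
proof -
  have "{w. wd u w \<noteq> 0} = {u}" by (auto simp: wd_def)
  then show ?thesis by (simp add: Tfin_def)
qed

lemma Tfin_wd2: "(\<lambda>w. wd u w - c * wd v w) \<in> Tfin"
proof -
  have "{w. wd u w - c * wd v w \<noteq> 0} \<subseteq> {u, v}" by (auto simp: wd_def)
  then show ?thesis unfolding Tfin_def using finite_subset by blast
qed

lemma Tfin_zero: "(\<lambda>w. 0) \<in> Tfin" by (simp add: Tfin_def)

lemma Lw_diff: "s \<in> Tfin \<Longrightarrow> t \<in> Tfin \<Longrightarrow> Lw (\<lambda>w. s w - t w) \<phi> = Lw s \<phi> - Lw t \<phi>"
  using Lw_add[of s "\<lambda>w. (-1) * t w" \<phi>] Lw_scale[of "-1" t \<phi>] Tfin_scale[of t "-1"] by simp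

lemma tmul_wd_left: "tmul (wd u) t = (\<lambda>w. if take (length u) w = u then t (drop (length u) w) else 0)"
proof (rule ext)
  fix w
  have "tmul (wd u) t w = (\<Sum>i\<in>{0..length w}. if i = length u then (if take (length u) w = u then t (drop i w) else 0) else 0)"
    unfolding tmul_def wd_def
  proof (rule sum.cong)
    fix i assume "i \<in> {0..length w}"
    then have li: "length (take i w) = i" by simp
    show "(if take i w = u then 1 else 0) * t (drop i w) = (if i = length u then (if take (length u) w = u then t (drop i w) else 0) else 0)"
      using li by (cases "take i w = u") auto
  qed simp
  also have "\<dots> = (if take (length u) w = u then t (drop (length u) w) else 0)"
    by (auto simp: min_def dest: arg_cong[of _ _ length])
  finally show "tmul (wd u) t w = (if take (length u) w = u then t (drop (length u) w) else 0)" .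
qed

lemma tmul_wd_right: "tmul t (wd v) = (\<lambda>w. if length v \<le> length w \<and> drop (length w - length v) w = v then t (take (length w - length v) w) else 0)"
proof (rule ext)
  fix w
  have "tmul t (wd v) w = (\<Sum>i\<in>{0..length w}. if i = length w - length v then (if length v \<le> length w \<and> drop (length w - length v) w = v then t (take i w) else 0) else 0)"
    unfolding tmul_def wd_def
    by (rule sum.cong) (auto dest: arg_cong[of _ _ length])
  also have "\<dots> = (if length v \<le> length w \<and> drop (length w - length v) w = v then t (take (length w - length v) w) else 0)"
    by auto
  finally show "tmul t (wd v) w = (if length v \<le> length w \<and> drop (length w - length v) w = v then t (take (length w - length v) w) else 0)" .
qed

lemma tmul_left_supp: "{w. tmul (wd u) t w \<noteq> 0} = (\<lambda>w. u @ w) ` {w. t w \<noteq> 0}"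
  unfolding tmul_wd_left
  by (auto simp: image_iff) (metis append_take_drop_id)

lemma tmul_right_supp: "{w. tmul t (wd v) w \<noteq> 0} = (\<lambda>w. w @ v) ` {w. t w \<noteq> 0}"
  unfolding tmul_wd_right
  apply (auto simp: image_iff)
  apply (metis append_take_drop_id)
  done

lemma Tfin_tmul_left: "t \<in> Tfin \<Longrightarrow> tmul (wd u) t \<in> Tfin"
  by (simp add: Tfin_def tmul_left_supp)

lemma Tfin_tmul_right: "t \<in> Tfin \<Longrightarrow> tmul t (wd v) \<in> Tfin"
  by (simp add: Tfin_def tmul_right_supp)

lemma Lw_tmul_left: "Lw (tmul (wd u) t) \<phi> = Lw t (\<lambda>w. \<phi> (u @ w))"
  unfolding Lw_def tmul_left_supp
  by (subst sum.reindex) (auto simp: inj_on_def tmul_wd_left)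

lemma Lw_tmul_right: "Lw (tmul t (wd v)) \<phi> = Lw t (\<lambda>w. \<phi> (w @ v))"
  unfolding Lw_def tmul_right_supp
  by (subst sum.reindex) (auto simp: inj_on_def tmul_wd_right)

lemma relT_fs: "relT x y = (\<lambda>w. wd [x,y] w - wd [y,x] w - fs (bl x y) (\<lambda>z. wd [z] w))"
proof (rule ext)
  fix w
  have "lin (brk x y) w = fs (bl x y) (\<lambda>z. wd [z] w)"
  proof (cases "\<exists>z. w = [z]")
    case True
    then obtain z where w: "w = [z]" by blast
    have "fs cs (\<lambda>z'. wd [z'] [z]) = sum_list (map (\<lambda>(c,w). if w = z then c else 0) cs)" for cs
      by (induction cs) (auto simp: wd_def)
    then show ?thesis by (simp add: lin_def w brk_bl)
  next
    case False
    then have "lin (brk x y) w = 0" by (auto simp: lin_def split: list.split)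
    moreover have "fs cs (\<lambda>z. wd [z] w) = 0" for cs
      using False by (induction cs) (auto simp: wd_def)
    ultimately show ?thesis by simp
  qed
  then show "relT x y w = wd [x,y] w - wd [y,x] w - fs (bl x y) (\<lambda>z. wd [z] w)"
    by (simp add: relT_def)
qed

lemma Tfin_fs: "(\<And>z. g z \<in> Tfin) \<Longrightarrow> (\<lambda>w. fs cs (\<lambda>z. g z w)) \<in> Tfin"
proof (induction cs)
  case Nil then show ?case by (simp add: Tfin_zero)
next
  case (Cons p cs)
  obtain c z where p: "p = (c,z)" by force
  show ?case using Tfin_add[OF Tfin_scale[OF Cons.prems[of z], of c] Cons.IH[OF Cons.prems]] by (simp add: p)
qed

lemma Lw_fs: "(\<And>z. g z \<in> Tfin) \<Longrightarrow> Lw (\<lambda>w. fs cs (\<lambda>z. g z w)) \<phi> = fs cs (\<lambda>z. Lw (g z) \<phi>)"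
proof (induction cs)
  case Nil then show ?case by simp
next
  case (Cons p cs)
  obtain c z where p: "p = (c,z)" by force
  have "Lw (\<lambda>w. c * g z w + fs cs (\<lambda>z. g z w)) \<phi> = Lw (\<lambda>w. c * g z w) \<phi> + Lw (\<lambda>w. fs cs (\<lambda>z. g z w)) \<phi>"
    by (rule Lw_add[OF Tfin_scale[OF Cons.prems] Tfin_fs[OF Cons.prems]])
  then show ?case using Cons by (simp add: p Lw_scale)
qed

lemma Tfin_relT: "relT x y \<in> Tfin"
  unfolding relT_fs
  by (rule Tfin_add[of _ "\<lambda>w. - fs (bl x y) (\<lambda>z. wd [z] w)", simplified],
      rule Tfin_add[of _ "\<lambda>w. - wd [y,x] w", simplified], rule Tfin_wd,
      rule Tfin_scale[of _ "-1", simplified], rule Tfin_wd,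
      rule Tfin_scale[of _ "-1", simplified], rule Tfin_fs, rule Tfin_wd)

lemma Nid_Tfin: "t \<in> Nid I0 d0 z1 z2 z3 \<Longrightarrow> t \<in> Tfin"
proof (induction rule: Nid.induct)
  case zero then show ?case by (rule Tfin_zero)
next
  case (add s t) then show ?case using Tfin_add by blast
next
  case (scale s c) then show ?case using Tfin_scale by blast
next
  case (rel u x y v) then show ?case by (intro Tfin_tmul_right Tfin_tmul_left Tfin_relT)
next
  case (gen g u)
  have "g \<in> Tfin" using gen
    by (auto simp: gens_def intro: Tfin_wd Tfin_wd2)
  then show ?case by (rule Tfin_tmul_left)
qed


context P begin

lemma Lw_Nid: "t \<in> Nid I0 d0 z1 z2 z3 \<Longrightarrow> Lw t (\<lambda>w. H w y0) = 0"
proof (induction rule: Nid.induct)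
  case zero then show ?case by simp
next
  case (add s t) then show ?case by (simp add: Lw_add Nid_Tfin)
next
  case (scale s c) then show ?case by (simp add: Lw_scale)
next
  case (rel u x y v)
  have T1: "(\<lambda>w. wd [x, y] w - wd [y, x] w) \<in> Tfin" using Tfin_wd2[of "[x,y]" 1 "[y,x]"] by simp
  have T2: "(\<lambda>w. fs (bl x y) (\<lambda>z. wd [z] w)) \<in> Tfin" by (rule Tfin_fs, rule Tfin_wd)
  have "Lw (tmul (tmul (wd u) (relT x y)) (wd v)) (\<lambda>w. H w y0) = Lw (relT x y) (\<lambda>w. H ((u @ w) @ v) y0)"
    by (simp add: Lw_tmul_left Lw_tmul_right)
  also have "\<dots> = H (u @ x # y # v) y0 - H (u @ y # x # v) y0 - fs (bl x y) (\<lambda>z. H (u @ z # v) y0)"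
    unfolding relT_fs Lw_diff[OF T1 T2] Lw_diff[OF Tfin_wd Tfin_wd] Lw_fs[OF Tfin_wd] Lw_wd by simp
  also have "\<dots> = 0" using H_rel[of u x y v y0] by simp
  finally show ?case .
next
  case (gen g u)
  have "Lw g (\<lambda>w. H (u @ w) y0) = 0"
    using gen
    by (auto simp: gens_def Lw_wd Lw_diff[OF Tfin_wd Tfin_scale[OF Tfin_wd]] Lw_scale H_snoc)
  then show ?case by (simp add: Lw_tmul_left)
qed

end


lemma tmul_zero_right[simp]: "tmul s (\<lambda>w. 0) = (\<lambda>w. 0)"
  by (simp add: tmul_def)

lemma tmul_lin_right: "tmul s (\<lambda>w. c * t w + t' w) = (\<lambda>w. c * tmul s t w + tmul s t' w)"
  by (rule ext) (simp add: tmul_def algebra_simps sum.distrib sum_distrib_left)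

lemma tmul_lin_left: "tmul (\<lambda>w. c * s w + s' w) t = (\<lambda>w. c * tmul s t w + tmul s' t w)"
  by (rule ext) (simp add: tmul_def algebra_simps sum.distrib sum_distrib_left)

lemma tmul_fs_left: "tmul (\<lambda>w. fs cs (\<lambda>z. g z w)) t = (\<lambda>w. fs cs (\<lambda>z. tmul (g z) t w))"
proof (induction cs)
  case Nil then show ?case by (simp add: tmul_def)
next
  case (Cons p cs)
  obtain c z where p: "p = (c,z)" by force
  show ?case using Cons by (simp add: p tmul_lin_left)
qed

lemma tmul_nil_left[simp]: "tmul (wd []) t = t"
  by (simp add: tmul_wd_left)

lemma tmul_wd_wd: "tmul (wd [e]) (tmul (wd u) t) = tmul (wd (e # u)) t"
proof (rule ext)
  fix x show "tmul (wd [e]) (tmul (wd u) t) x = tmul (wd (e # u)) t x"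
    by (cases x) (auto simp: tmul_wd_left)
qed

lemma tmul_wd_assoc: "tmul (wd [e]) (tmul s (wd v)) = tmul (tmul (wd [e]) s) (wd v)"
proof (rule ext)
  fix x show "tmul (wd [e]) (tmul s (wd v)) x = tmul (tmul (wd [e]) s) (wd v) x"
  proof (cases x)
    case Nil then show ?thesis by (simp add: tmul_wd_left tmul_wd_right)
  next
    case (Cons a x')
    show ?thesis
    proof (cases "length v \<le> length x'")
      case True
      then have "Suc (length x') - length v = Suc (length x' - length v)" by simp
      then show ?thesis using True Cons by (simp add: tmul_wd_left tmul_wd_right)
    next
      case False
      then show ?thesis using Cons by (auto simp: tmul_wd_left tmul_wd_right)
    qed
  qed
qed

lemma tmul_add_right: "tmul s (\<lambda>w. t w + t' w) = (\<lambda>w. tmul s t w + tmul s t' w)"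
  using tmul_lin_right[of s 1 t t'] by simp

lemma Tfin_induct_aux:
  assumes P0: "P (\<lambda>w. 0)" and PS: "\<And>u c t. P t \<Longrightarrow> P (\<lambda>w. c * wd u w + t w)"
  shows "finite A \<Longrightarrow> {w. t w \<noteq> 0} = A \<Longrightarrow> P t"
proof (induction A arbitrary: t rule: finite_induct)
  case empty
  then have "t = (\<lambda>w. 0)" by auto
  then show ?case using P0 by simp
next
  case (insert u A)
  let ?t' = "t(u := 0)"
  have "{w. ?t' w \<noteq> 0} = A" using insert by auto
  then have "P ?t'" by (rule insert.IH)
  then have "P (\<lambda>w. t u * wd u w + ?t' w)" by (rule PS)
  moreover have "(\<lambda>w. t u * wd u w + ?t' w) = t" by (auto simp: wd_def)
  ultimately show ?case by simp
qed

lemma Tfin_induct: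
  assumes "t \<in> Tfin" "P (\<lambda>w. 0)" "\<And>u c t. P t \<Longrightarrow> P (\<lambda>w. c * wd u w + t w)"
  shows "P t"
  using Tfin_induct_aux[of P, OF assms(2,3)] assms(1) by (auto simp: Tfin_def)

lemma Nid_scale': "s \<in> Nid I0 d0 z1 z2 z3 \<Longrightarrow> (\<lambda>w. c * s w) \<in> Nid I0 d0 z1 z2 z3"
  by (rule Nid.scale)

lemma Nid_comb: "s \<in> Nid I0 d0 z1 z2 z3 \<Longrightarrow> t \<in> Nid I0 d0 z1 z2 z3 \<Longrightarrow> (\<lambda>w. c * s w + t w) \<in> Nid I0 d0 z1 z2 z3"
  by (rule Nid.add[OF Nid.scale])

lemma Nid_diff: "s \<in> Nid I0 d0 z1 z2 z3 \<Longrightarrow> t \<in> Nid I0 d0 z1 z2 z3 \<Longrightarrow> (\<lambda>w. s w - t w) \<in> Nid I0 d0 z1 z2 z3"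
  using Nid_comb[of t I0 d0 z1 z2 z3 s "-1"] by (simp add: add.commute)

lemma Nid_zero': "(\<lambda>w. 0) \<in> Nid I0 d0 z1 z2 z3" by (rule Nid.zero)

lemma tmul_relT_Nid: "t \<in> Tfin \<Longrightarrow> tmul (relT x y) t \<in> Nid I0 d0 z1 z2 z3"
proof (erule Tfin_induct)
  show "tmul (relT x y) (\<lambda>w. 0) \<in> Nid I0 d0 z1 z2 z3" by (simp add: Nid.zero)
next
  fix u c t assume "tmul (relT x y) t \<in> Nid I0 d0 z1 z2 z3"
  moreover have "tmul (relT x y) (wd u) \<in> Nid I0 d0 z1 z2 z3"
    using Nid.rel[of "[]" x y u I0 d0 z1 z2 z3] by simp
  ultimately show "tmul (relT x y) (\<lambda>w. c * wd u w + t w) \<in> Nid I0 d0 z1 z2 z3"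
    by (simp add: tmul_lin_right Nid_comb)
qed

lemma Nid_left: "t \<in> Nid I0 d0 z1 z2 z3 \<Longrightarrow> tmul (wd [e]) t \<in> Nid I0 d0 z1 z2 z3"
proof (induction rule: Nid.induct)
  case zero then show ?case by (simp add: Nid.zero)
next
  case (add s t) then show ?case by (simp add: tmul_add_right Nid.add)
next
  case (scale s c) then show ?case using Nid_comb[of _ I0 d0 z1 z2 z3 "\<lambda>w. 0" c]
    by (simp add: tmul_lin_right[of _ c _ "\<lambda>w. 0", simplified] Nid.zero)
next
  case (rel u x y v)
  have "tmul (wd [e]) (tmul (tmul (wd u) (relT x y)) (wd v)) = tmul (tmul (wd (e # u)) (relT x y)) (wd v)"
    by (simp add: tmul_wd_assoc tmul_wd_wd)
  then show ?case by (simp add: Nid.rel)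
next
  case (gen g u)
  then show ?case by (simp add: tmul_wd_wd Nid.gen)
qed


fun sh :: "Lb \<Rightarrow> int" where
  "sh (LD n) = n" | "sh (LI n) = n" | "sh _ = 0"

lemma Vsp_fin: "F \<in> Vsp a b Fp \<Longrightarrow> finite {m. F m \<noteq> (\<lambda>w. 0)}" by (simp add: Vsp_def)
lemma Vsp_Tfin: "F \<in> Vsp a b Fp \<Longrightarrow> F m \<in> Tfin" by (simp add: Vsp_def)
lemma Vsp_out: "F \<in> Vsp a b Fp \<Longrightarrow> m \<notin> Sset a b Fp \<Longrightarrow> F m = (\<lambda>w. 0)" by (simp add: Vsp_def)

lemma Vsp_comb: "F \<in> Vsp a b Fp \<Longrightarrow> G \<in> Vsp a b Fp \<Longrightarrow> (\<lambda>m w. c * F m w + G m w) \<in> Vsp a b Fp"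
proof -
  assume F: "F \<in> Vsp a b Fp" and G: "G \<in> Vsp a b Fp"
  have "{m. (\<lambda>w. c * F m w + G m w) \<noteq> (\<lambda>w. 0)} \<subseteq> {m. F m \<noteq> (\<lambda>w. 0)} \<union> {m. G m \<noteq> (\<lambda>w. 0)}"
    by auto
  then have "finite {m. (\<lambda>w. c * F m w + G m w) \<noteq> (\<lambda>w. 0)}"
    using Vsp_fin[OF F] Vsp_fin[OF G] finite_subset by blast
  moreover have "(\<lambda>w. c * F m w + G m w) \<in> Tfin" for m
    using Tfin_add[OF Tfin_scale[OF Vsp_Tfin[OF F]] Vsp_Tfin[OF G]] by simp
  ultimately show ?thesis using F G by (auto simp: Vsp_def)
qed

lemma Vsp_zero: "(\<lambda>m w. 0) \<in> Vsp a b Fp"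
  by (simp add: Vsp_def Tfin_zero)

lemma Vsp_add: "F \<in> Vsp a b Fp \<Longrightarrow> G \<in> Vsp a b Fp \<Longrightarrow> (\<lambda>m w. F m w + G m w) \<in> Vsp a b Fp"
  using Vsp_comb[of F a b Fp G 1] by simp

lemma Vsp_scale: "F \<in> Vsp a b Fp \<Longrightarrow> (\<lambda>m w. c * F m w) \<in> Vsp a b Fp"
  using Vsp_comb[of F a b Fp "\<lambda>m w. 0" c] Vsp_zero by simp

lemma Vsp_diff: "F \<in> Vsp a b Fp \<Longrightarrow> G \<in> Vsp a b Fp \<Longrightarrow> (\<lambda>m w. F m w - G m w) \<in> Vsp a b Fp"
  using Vsp_comb[of G a b Fp F "-1"] by simp

lemma Vsp_fs: "(\<And>z. G z \<in> Vsp a b Fp) \<Longrightarrow> (\<lambda>m w. fs cs (\<lambda>z. G z m w)) \<in> Vsp a b Fp"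
proof (induction cs)
  case Nil then show ?case by (simp add: Vsp_zero)
next
  case (Cons p cs)
  obtain c z where p: "p = (c,z)" by force
  show ?case using Vsp_comb[OF Cons.prems[of z] Cons.IH[OF Cons.prems], where c=c] by (simp add: p)
qed

lemma Nsub_Vsp: "F \<in> Nsub I0 d0 z1 z2 z3 a b Fp \<Longrightarrow> F \<in> Vsp a b Fp" by (simp add: Nsub_def)
lemma Nsub_Nid: "F \<in> Nsub I0 d0 z1 z2 z3 a b Fp \<Longrightarrow> F m \<in> Nid I0 d0 z1 z2 z3" by (simp add: Nsub_def)

lemma Nsub_comb: "F \<in> Nsub I0 d0 z1 z2 z3 a b Fp \<Longrightarrow> G \<in> Nsub I0 d0 z1 z2 z3 a b Fp \<Longrightarrow>
   (\<lambda>m w. c * F m w + G m w) \<in> Nsub I0 d0 z1 z2 z3 a b Fp"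
  by (auto simp: Nsub_def intro: Vsp_comb Nid_comb)

lemma Nsub_zero: "(\<lambda>m w. 0) \<in> Nsub I0 d0 z1 z2 z3 a b Fp"
  by (simp add: Nsub_def Vsp_zero Nid.zero)

lemma Nsub_fs: "(\<And>z. G z \<in> Nsub I0 d0 z1 z2 z3 a b Fp) \<Longrightarrow> (\<lambda>m w. fs cs (\<lambda>z. G z m w)) \<in> Nsub I0 d0 z1 z2 z3 a b Fp"
proof (induction cs)
  case Nil then show ?case by (simp add: Nsub_zero)
next
  case (Cons p cs)
  obtain c z where p: "p = (c,z)" by force
  show ?case using Nsub_comb[OF Cons.prems[of z] Cons.IH[OF Cons.prems], where c=c] by (simp add: p)
qed

context P begin

definition coef :: "Lb \<Rightarrow> int \<Rightarrow> complex" where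
  "coef e m = (if m \<in> Sset a b Fp then (case e of LD n \<Rightarrow> a + of_int (m - n) + of_int n * b | LI n \<Rightarrow> Fp | _ \<Rightarrow> 0) else 0)"

lemma Am_eq: "Am e y = (\<lambda>m. coef e m * mk y (m - sh e))"
  by (rule ext) (auto simp: Am_def coef_def split: Lb.split)

lemma actV_eq: "actV a b Fp e F = (\<lambda>m w. tmul (wd [e]) (F m) w + coef e m * F (m - sh e) w)"
  by (rule ext, rule ext) (auto simp: actV_def coef_def split: Lb.split)

lemma actV_Vsp: "F \<in> Vsp a b Fp \<Longrightarrow> actV a b Fp e F \<in> Vsp a b Fp"
proof -
  assume F: "F \<in> Vsp a b Fp"
  let ?A = "{m. F m \<noteq> (\<lambda>w. 0)}"
  have "{m. actV a b Fp e F m \<noteq> (\<lambda>w. 0)} \<subseteq> ?A \<union> (\<lambda>j. j + sh e) ` ?A"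
  proof
    fix m assume m: "m \<in> {m. actV a b Fp e F m \<noteq> (\<lambda>w. 0)}"
    show "m \<in> ?A \<union> (\<lambda>j. j + sh e) ` ?A"
    proof (rule ccontr)
      assume "m \<notin> ?A \<union> (\<lambda>j. j + sh e) ` ?A"
      then have "F m = (\<lambda>w. 0)" "F (m - sh e) = (\<lambda>w. 0)"
        by (auto simp: image_iff)
      then show False using m by (simp add: actV_eq)
    qed
  qed
  then have "finite {m. actV a b Fp e F m \<noteq> (\<lambda>w. 0)}"
    using Vsp_fin[OF F] finite_subset by blast
  moreover have "actV a b Fp e F m \<in> Tfin" for m
    unfolding actV_eq
    using Tfin_add[OF Tfin_tmul_left[OF Vsp_Tfin[OF F]] Tfin_scale[OF Vsp_Tfin[OF F]]] by simp
  moreover have "actV a b Fp e F m = (\<lambda>w. 0)" if "m \<notin> Sset a b Fp" for m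
    using that Vsp_out[OF F that] by (simp add: actV_eq coef_def)
  ultimately show ?thesis by (simp add: Vsp_def)
qed

lemma actV_lin: "actV a b Fp e (\<lambda>m w. c * F m w + G m w) = (\<lambda>m w. c * actV a b Fp e F m w + actV a b Fp e G m w)"
  by (simp add: actV_eq tmul_lin_right) (simp add: algebra_simps)

lemma actV_fs: "actV a b Fp e (\<lambda>m w. fs cs (\<lambda>z. G z m w)) = (\<lambda>m w. fs cs (\<lambda>z. actV a b Fp e (G z) m w))"
proof (induction cs)
  case Nil then show ?case by (simp add: actV_eq)
next
  case (Cons p cs)
  obtain c z where p: "p = (c,z)" by force
  show ?case using Cons by (simp add: p actV_lin)
qed

lemma actV_Nsub: "F \<in> Nsub I0 d0 z1 z2 z3 a b Fp \<Longrightarrow> actV a b Fp e F \<in> Nsub I0 d0 z1 z2 z3 a b Fp"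
proof -
  assume F: "F \<in> Nsub I0 d0 z1 z2 z3 a b Fp"
  have "actV a b Fp e F m \<in> Nid I0 d0 z1 z2 z3" for m
  proof -
    have A: "tmul (wd [e]) (F m) \<in> Nid I0 d0 z1 z2 z3" by (rule Nid_left[OF Nsub_Nid[OF F]])
    have B: "F (m - sh e) \<in> Nid I0 d0 z1 z2 z3" by (rule Nsub_Nid[OF F])
    show ?thesis unfolding actV_eq using Nid_comb[OF B A, where c = "coef e m"] by (simp add: add.commute)
  qed
  then show ?thesis using actV_Vsp[OF Nsub_Vsp[OF F]] by (simp add: Nsub_def)
qed

end


lemma Lw_phi_scale: "Lw t (\<lambda>w. c * \<phi> w) = c * Lw t \<phi>"
  by (simp add: Lw_def sum_distrib_left algebra_simps)

lemma tmul_scale_right: "tmul s (\<lambda>w. c * t w) = (\<lambda>w. c * tmul s t w)"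
  using tmul_lin_right[of s c t "\<lambda>w. 0"] by simp

lemma tmul_diff_left: "tmul (\<lambda>w. s w - s' w) t = (\<lambda>w. tmul s t w - tmul s' t w)"
  using tmul_lin_left[of "-1" s' s t] by simp

context P begin

definition dl :: "int \<Rightarrow> int \<Rightarrow> complex" where "dl m = (\<lambda>j. if j = m then 1 else 0)"

definition LamV :: "vel \<Rightarrow> complex" where
  "LamV F = (\<Sum>m\<in>{m. F m \<noteq> (\<lambda>w. 0)}. Lw (F m) (\<lambda>w. H w (dl m)))"

lemma LamV_superset: "finite A \<Longrightarrow> {m. F m \<noteq> (\<lambda>w. 0)} \<subseteq> A \<Longrightarrow> LamV F = (\<Sum>m\<in>A. Lw (F m) (\<lambda>w. H w (dl m)))"
  unfolding LamV_def by (rule sum.mono_neutral_left) auto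

lemma LamV_comb: "F \<in> Vsp a b Fp \<Longrightarrow> G \<in> Vsp a b Fp \<Longrightarrow> LamV (\<lambda>m w. c * F m w + G m w) = c * LamV F + LamV G"
proof -
  assume F: "F \<in> Vsp a b Fp" and G: "G \<in> Vsp a b Fp"
  let ?A = "{m. F m \<noteq> (\<lambda>w. 0)} \<union> {m. G m \<noteq> (\<lambda>w. 0)}"
  have fA: "finite ?A" using Vsp_fin[OF F] Vsp_fin[OF G] by simp
  have "LamV (\<lambda>m w. c * F m w + G m w) = (\<Sum>m\<in>?A. Lw (\<lambda>w. c * F m w + G m w) (\<lambda>w. H w (dl m)))"
    by (rule LamV_superset[OF fA]) auto
  also have "\<dots> = (\<Sum>m\<in>?A. c * Lw (F m) (\<lambda>w. H w (dl m)) + Lw (G m) (\<lambda>w. H w (dl m)))"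
    by (rule sum.cong) (simp_all add: Lw_add[OF Tfin_scale[OF Vsp_Tfin[OF F]] Vsp_Tfin[OF G]] Lw_scale)
  also have "\<dots> = c * LamV F + LamV G"
    by (simp add: sum.distrib sum_distrib_left LamV_superset[OF fA])
  finally show ?thesis .
qed

lemma LamV_zero: "LamV (\<lambda>m w. 0) = 0" by (simp add: LamV_def)

lemma LamV_fs: "(\<And>z. G z \<in> Vsp a b Fp) \<Longrightarrow> LamV (\<lambda>m w. fs cs (\<lambda>z. G z m w)) = fs cs (\<lambda>z. LamV (G z))"
proof (induction cs)
  case Nil then show ?case by (simp add: LamV_zero)
next
  case (Cons p cs)
  obtain c z where p: "p = (c,z)" by force
  show ?case using LamV_comb[OF Cons.prems[of z] Vsp_fs[OF Cons.prems], of c cs] Cons by (simp add: p)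
qed

lemma LamV_Nsub: "F \<in> Nsub I0 d0 z1 z2 z3 a b Fp \<Longrightarrow> LamV F = 0"
  unfolding LamV_def by (rule sum.neutral) (simp add: Lw_Nid Nsub_Nid)

lemma LamV_eqN: "F \<in> Vsp a b Fp \<Longrightarrow> G \<in> Vsp a b Fp \<Longrightarrow> (\<lambda>m w. F m w - G m w) \<in> Nsub I0 d0 z1 z2 z3 a b Fp
  \<Longrightarrow> LamV F = LamV G"
  using LamV_comb[of G F "-1"] LamV_Nsub[of "\<lambda>m w. F m w - G m w"] by simp

lemma mk_Am: "mk (Am e y) = Am e y"
  by (rule ext) (auto simp: mk_def Am_def)

lemma Am_dl: "Am e (dl m) = (\<lambda>j. (if m \<in> Sset a b Fp then coef e (m + sh e) else 0) * dl (m + sh e) j)"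
  by (rule ext) (auto simp: Am_eq mk_def dl_def)

lemma actV_supp: "F \<in> Vsp a b Fp \<Longrightarrow> {m. actV a b Fp e F m \<noteq> (\<lambda>w. 0)} \<subseteq> {m. F m \<noteq> (\<lambda>w. 0)} \<union> (\<lambda>j. j + sh e) ` {m. F m \<noteq> (\<lambda>w. 0)}"
proof
  fix m assume m: "m \<in> {m. actV a b Fp e F m \<noteq> (\<lambda>w. 0)}"
  show "m \<in> {m. F m \<noteq> (\<lambda>w. 0)} \<union> (\<lambda>j. j + sh e) ` {m. F m \<noteq> (\<lambda>w. 0)}"
  proof (rule ccontr)
    assume "m \<notin> {m. F m \<noteq> (\<lambda>w. 0)} \<union> (\<lambda>j. j + sh e) ` {m. F m \<noteq> (\<lambda>w. 0)}"
    then have "F m = (\<lambda>w. 0)" "F (m - sh e) = (\<lambda>w. 0)" by (auto simp: image_iff)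
    then show False using m by (simp add: actV_eq)
  qed
qed

lemma LamV_neg: "neg e \<Longrightarrow> F \<in> Vsp a b Fp \<Longrightarrow> LamV (actV a b Fp e F) = 0"
proof -
  assume ne: "neg e" and F: "F \<in> Vsp a b Fp"
  define s where "s = sh e"
  define A0 where "A0 = {m. F m \<noteq> (\<lambda>w. 0)}"
  define A where "A = A0 \<union> (\<lambda>j. j + s) ` A0"
  define \<Phi> where "\<Phi> m = (\<lambda>w. H w (dl m))" for m
  define \<kappa> where "\<kappa> m = (if m \<in> Sset a b Fp then coef e (m + s) else 0)" for m
  have fA0: "finite A0" using Vsp_fin[OF F] by (simp add: A0_def)
  have fA: "finite A" using fA0 by (simp add: A_def)
  have 1: "LamV (actV a b Fp e F) = (\<Sum>m\<in>A. Lw (actV a b Fp e F m) (\<Phi> m))"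
    unfolding \<Phi>_def by (rule LamV_superset[OF fA]) (use actV_supp[OF F, of e] in \<open>simp add: A_def A0_def s_def\<close>)
  have 2: "Lw (actV a b Fp e F m) (\<Phi> m) = - (\<kappa> m * Lw (F m) (\<Phi> (m + s))) + coef e m * Lw (F (m - s)) (\<Phi> m)" for m
  proof -
    have "Lw (actV a b Fp e F m) (\<Phi> m) = Lw (tmul (wd [e]) (F m)) (\<Phi> m) + Lw (\<lambda>w. coef e m * F (m - s) w) (\<Phi> m)"
      unfolding actV_eq s_def by (rule Lw_add[OF Tfin_tmul_left[OF Vsp_Tfin[OF F]] Tfin_scale[OF Vsp_Tfin[OF F]]])
    also have "Lw (tmul (wd [e]) (F m)) (\<Phi> m) = Lw (F m) (\<lambda>w. - (\<kappa> m * H w (dl (m + s))))"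
      unfolding Lw_tmul_left \<Phi>_def using ne by (simp add: H_neg Am_dl H_scale \<kappa>_def s_def)
    also have "\<dots> = - (\<kappa> m * Lw (F m) (\<Phi> (m + s)))"
      using Lw_phi_scale[of "F m" "- \<kappa> m" "\<Phi> (m + s)"] by (simp add: \<Phi>_def)
    finally show ?thesis by (simp add: Lw_scale)
  qed
  have 3: "(\<Sum>m\<in>A. \<kappa> m * Lw (F m) (\<Phi> (m + s))) = (\<Sum>m\<in>A0. \<kappa> m * Lw (F m) (\<Phi> (m + s)))"
    by (rule sum.mono_neutral_right) (use fA in \<open>auto simp: A_def A0_def\<close>)
  have 4: "(\<Sum>m\<in>A. coef e m * Lw (F (m - s)) (\<Phi> m)) = (\<Sum>m\<in>(\<lambda>j. j + s) ` A0. coef e m * Lw (F (m - s)) (\<Phi> m))"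
  proof (rule sum.mono_neutral_right)
    show "\<forall>i\<in>A - (\<lambda>j. j + s) ` A0. coef e i * Lw (F (i - s)) (\<Phi> i) = 0"
    proof
      fix i assume i: "i \<in> A - (\<lambda>j. j + s) ` A0"
      have "F (i - s) = (\<lambda>w. 0)"
      proof (rule ccontr)
        assume "F (i - s) \<noteq> (\<lambda>w. 0)"
        then have "i - s \<in> A0" by (simp add: A0_def)
        then have "(i - s) + s \<in> (\<lambda>j. j + s) ` A0" by (rule imageI)
        then show False using i by simp
      qed
      then show "coef e i * Lw (F (i - s)) (\<Phi> i) = 0" by simp
    qed
  qed (use fA in \<open>auto simp: A_def\<close>)
  have 5: "\<dots> = (\<Sum>j\<in>A0. coef e (j + s) * Lw (F j) (\<Phi> (j + s)))"
    by (subst sum.reindex) (auto simp: inj_on_def)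
  have 6: "(\<Sum>m\<in>A0. \<kappa> m * Lw (F m) (\<Phi> (m + s))) = (\<Sum>j\<in>A0. coef e (j + s) * Lw (F j) (\<Phi> (j + s)))"
  proof (rule sum.cong)
    fix j assume "j \<in> A0"
    then have "j \<in> Sset a b Fp" using Vsp_out[OF F] by (auto simp: A0_def)
    then show "\<kappa> j * Lw (F j) (\<Phi> (j + s)) = coef e (j + s) * Lw (F j) (\<Phi> (j + s))" by (simp add: \<kappa>_def)
  qed simp
  have "LamV (actV a b Fp e F) = (\<Sum>m\<in>A. coef e m * Lw (F (m - s)) (\<Phi> m)) - (\<Sum>m\<in>A. \<kappa> m * Lw (F m) (\<Phi> (m + s)))"
    unfolding 1 2 by (simp add: sum_subtractf)
  then show ?thesis using 3 4 5 6 by simp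
qed

end


lemma tmul_add_right': "tmul s (\<lambda>w. t w + t' w) = (\<lambda>w. tmul s t w + tmul s t' w)"
  by (rule tmul_add_right)

lemma tmul_wd_nil: "tmul (wd [e]) (wd []) = wd [e]"
  unfolding tmul_wd_left
proof (rule ext)
  fix x show "(if take (length [e]) x = [e] then wd [] (drop (length [e]) x) else 0) = wd [e] x"
    by (cases x) (auto simp: wd_def)
qed

context P begin

lemma mk_coef: "mk (\<lambda>m. coef e m * X m) = (\<lambda>m. coef e m * X m)"
  by (rule ext) (simp add: mk_def coef_def)

lemma actV_comm: "F \<in> Vsp a b Fp \<Longrightarrow>
  (\<lambda>m w. actV a b Fp e (actV a b Fp e' F) m w - actV a b Fp e' (actV a b Fp e F) m w
      - fs (bl e e') (\<lambda>z. actV a b Fp z F m w)) \<in> Nsub I0 d0 z1 z2 z3 a b Fp"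
proof -
  assume F: "F \<in> Vsp a b Fp"
  have V: "(\<lambda>m w. actV a b Fp e (actV a b Fp e' F) m w - actV a b Fp e' (actV a b Fp e F) m w
      - fs (bl e e') (\<lambda>z. actV a b Fp z F m w)) \<in> Vsp a b Fp"
    by (intro Vsp_diff Vsp_fs actV_Vsp F)
  have N: "(\<lambda>w. actV a b Fp e (actV a b Fp e' F) m w - actV a b Fp e' (actV a b Fp e F) m w
      - fs (bl e e') (\<lambda>z. actV a b Fp z F m w)) \<in> Nid I0 d0 z1 z2 z3" for m
  proof -
    have eq: "actV a b Fp e (actV a b Fp e' F) m w - actV a b Fp e' (actV a b Fp e F) m w
      - fs (bl e e') (\<lambda>z. actV a b Fp z F m w) = tmul (relT e e') (F m) w" for w
    proof -
      define y where "y = (\<lambda>j. F j w)"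
      have mky: "mk y = y" by (rule ext) (simp add: mk_def y_def Vsp_out[OF F])
      have AM: "coef e m * (coef e' (m - sh e) * F (m - sh e - sh e') w) - coef e' m * (coef e (m - sh e') * F (m - sh e' - sh e) w)
          = fs (bl e e') (\<lambda>z. coef z m * F (m - sh z) w)"
        using amod[of e e' y m] unfolding Am_eq mk_coef mky by (simp add: y_def)
      have TP: "tmul (wd [e]) (tmul (wd [e']) (F m)) w - tmul (wd [e']) (tmul (wd [e]) (F m)) w - fs (bl e e') (\<lambda>z. tmul (wd [z]) (F m) w)
          = tmul (relT e e') (F m) w"
        unfolding relT_fs tmul_diff_left tmul_fs_left tmul_wd_wd by simp
      have E1: "actV a b Fp e (actV a b Fp e' F) m w = tmul (wd [e]) (tmul (wd [e']) (F m)) w + coef e' m * tmul (wd [e]) (F (m - sh e')) w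
          + (coef e m * tmul (wd [e']) (F (m - sh e)) w + coef e m * (coef e' (m - sh e) * F (m - sh e - sh e') w))"
        by (simp add: actV_eq tmul_add_right tmul_scale_right) (simp add: algebra_simps)
      have E2: "actV a b Fp e' (actV a b Fp e F) m w = tmul (wd [e']) (tmul (wd [e]) (F m)) w + coef e m * tmul (wd [e']) (F (m - sh e)) w
          + (coef e' m * tmul (wd [e]) (F (m - sh e')) w + coef e' m * (coef e (m - sh e') * F (m - sh e' - sh e) w))"
        by (simp add: actV_eq tmul_add_right tmul_scale_right) (simp add: algebra_simps)
      have E3: "fs (bl e e') (\<lambda>z. actV a b Fp z F m w) = fs (bl e e') (\<lambda>z. tmul (wd [z]) (F m) w) + fs (bl e e') (\<lambda>z. coef z m * F (m - sh z) w)"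
        by (simp add: actV_eq fs_add)
      have R: "actV a b Fp e (actV a b Fp e' F) m w - actV a b Fp e' (actV a b Fp e F) m w - fs (bl e e') (\<lambda>z. actV a b Fp z F m w)
        = (tmul (wd [e]) (tmul (wd [e']) (F m)) w - tmul (wd [e']) (tmul (wd [e]) (F m)) w - fs (bl e e') (\<lambda>z. tmul (wd [z]) (F m) w))
        + ((coef e m * (coef e' (m - sh e) * F (m - sh e - sh e') w) - coef e' m * (coef e (m - sh e') * F (m - sh e' - sh e) w))
           - fs (bl e e') (\<lambda>z. coef z m * F (m - sh z) w))"
        unfolding E1 E2 E3 by (simp add: algebra_simps)
      show ?thesis unfolding R TP AM by simp
    qed
    show ?thesis unfolding eq by (rule tmul_relT_Nid[OF Vsp_Tfin[OF F]])
  qed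
  show ?thesis using V N by (simp add: Nsub_def)
qed

definition vt :: "(int \<Rightarrow> complex) \<Rightarrow> vel" where
  "vt y = (\<lambda>m w. mk y m * wd [] w)"

lemma vt_Vsp: "finite {m. y m \<noteq> 0} \<Longrightarrow> vt y \<in> Vsp a b Fp"
proof -
  assume fy: "finite {m. y m \<noteq> 0}"
  have "{m. vt y m \<noteq> (\<lambda>w. 0)} \<subseteq> {m. y m \<noteq> 0}" by (auto simp: vt_def mk_def)
  then have "finite {m. vt y m \<noteq> (\<lambda>w. 0)}" using fy finite_subset by blast
  moreover have "vt y m \<in> Tfin" for m unfolding vt_def by (rule Tfin_scale[OF Tfin_wd])
  ultimately show ?thesis by (auto simp: Vsp_def vt_def mk_def)
qed

lemma gen_Nid: "\<not> neg e \<Longrightarrow> (\<lambda>w. wd [e] w - chi e * wd [] w) \<in> Nid I0 d0 z1 z2 z3"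
proof -
  assume pe: "\<not> neg e"
  have "(\<lambda>w. wd [e] w - chi e * wd [] w) \<in> gens I0 d0 z1 z2 z3"
  proof (cases e)
    case (LD n)
    then show ?thesis using pe
      by (cases "n = 0") (auto simp: gens_def)
  next
    case (LI n)
    then show ?thesis using pe
      by (cases "n = 0") (auto simp: gens_def)
  qed (auto simp: gens_def)
  then show ?thesis using Nid.gen[of _ I0 d0 z1 z2 z3 "[]"] by simp
qed

lemma actV_vt: "\<not> neg e \<Longrightarrow> finite {m. y m \<noteq> 0} \<Longrightarrow>
   (\<lambda>m w. actV a b Fp e (vt y) m w - vt (\<lambda>j. chi e * y j + Am e y j) m w) \<in> Nsub I0 d0 z1 z2 z3 a b Fp"
proof -
  assume pe: "\<not> neg e" and fy: "finite {m. y m \<noteq> 0}"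
  have fy': "finite {m. chi e * y m + Am e y m \<noteq> 0}"
  proof -
    have "{m. chi e * y m + Am e y m \<noteq> 0} \<subseteq> {m. y m \<noteq> 0} \<union> (\<lambda>j. j + sh e) ` {m. y m \<noteq> 0}"
    proof
      fix m assume m: "m \<in> {m. chi e * y m + Am e y m \<noteq> 0}"
      show "m \<in> {m. y m \<noteq> 0} \<union> (\<lambda>j. j + sh e) ` {m. y m \<noteq> 0}"
      proof (rule ccontr)
        assume "m \<notin> {m. y m \<noteq> 0} \<union> (\<lambda>j. j + sh e) ` {m. y m \<noteq> 0}"
        then have y1: "y m = 0" and y2: "y (m - sh e) = 0" by (auto simp: image_iff)
        have "mk y (m - sh e) = 0" using y2 by (simp add: mk_def)
        then have "Am e y m = 0" by (simp add: Am_eq)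
        then show False using m y1 by simp
      qed
    qed
    then show ?thesis using fy finite_subset by blast
  qed
  have V: "(\<lambda>m w. actV a b Fp e (vt y) m w - vt (\<lambda>j. chi e * y j + Am e y j) m w) \<in> Vsp a b Fp"
    by (intro Vsp_diff actV_Vsp vt_Vsp fy fy')
  have eq: "(\<lambda>w. actV a b Fp e (vt y) m w - vt (\<lambda>j. chi e * y j + Am e y j) m w)
      = (\<lambda>w. mk y m * (wd [e] w - chi e * wd [] w))" for m
  proof (rule ext)
    fix w
    have "mk (\<lambda>j. chi e * y j + Am e y j) m = chi e * mk y m + Am e y m"
      by (simp add: mk_def Am_def)
    then show "actV a b Fp e (vt y) m w - vt (\<lambda>j. chi e * y j + Am e y j) m w = mk y m * (wd [e] w - chi e * wd [] w)"
      by (simp add: actV_eq vt_def tmul_scale_right tmul_wd_nil Am_eq) (simp add: algebra_simps)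
  qed
  have N: "(\<lambda>w. actV a b Fp e (vt y) m w - vt (\<lambda>j. chi e * y j + Am e y j) m w) \<in> Nid I0 d0 z1 z2 z3" for m
    unfolding eq by (rule Nid.scale[OF gen_Nid[OF pe]])
  show ?thesis using V N by (simp add: Nsub_def)
qed

lemma LamV_vt: "finite {m. y m \<noteq> 0} \<Longrightarrow> LamV (vt y) = mk y (k - 1)"
proof -
  assume fy: "finite {m. y m \<noteq> 0}"
  let ?A = "insert (k - 1) {m. y m \<noteq> 0}"
  have "LamV (vt y) = (\<Sum>m\<in>?A. Lw (vt y m) (\<lambda>w. H w (dl m)))"
    by (rule LamV_superset) (use fy in \<open>auto simp: vt_def mk_def\<close>)
  also have "\<dots> = (\<Sum>m\<in>?A. if m = k - 1 then mk y m else 0)"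
    by (rule sum.cong) (auto simp: vt_def Lw_scale Lw_wd dl_def)
  also have "\<dots> = mk y (k - 1)" using fy by simp
  finally show ?thesis .
qed

end


context P begin

fun actw :: "Lb list \<Rightarrow> vel \<Rightarrow> vel" where
  "actw [] F = F"
| "actw (e # s) F = actV a b Fp e (actw s F)"

lemma actw_Vsp: "F \<in> Vsp a b Fp \<Longrightarrow> actw s F \<in> Vsp a b Fp"
  by (induction s) (auto intro: actV_Vsp)

lemma actw_Nsub: "F \<in> Nsub I0 d0 z1 z2 z3 a b Fp \<Longrightarrow> actw s F \<in> Nsub I0 d0 z1 z2 z3 a b Fp"
  by (induction s) (auto intro: actV_Nsub)

lemma actw_lin: "actw s (\<lambda>m w. c * F m w + G m w) = (\<lambda>m w. c * actw s F m w + actw s G m w)"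
  by (induction s) (auto simp: actV_lin)

lemma actw_snoc: "actw (s @ [e]) F = actw s (actV a b Fp e F)"
  by (induction s) auto

lemma actV_diff: "actV a b Fp e (\<lambda>m w. F m w - G m w) = (\<lambda>m w. actV a b Fp e F m w - actV a b Fp e G m w)"
  using actV_lin[of e "-1" G F] by simp

lemma actV_add: "actV a b Fp e (\<lambda>m w. F m w + G m w) = (\<lambda>m w. actV a b Fp e F m w + actV a b Fp e G m w)"
  using actV_lin[of e 1 F G] by simp

lemma actw_diff: "actw s (\<lambda>m w. F m w - G m w) = (\<lambda>m w. actw s F m w - actw s G m w)"
  using actw_lin[of s "-1" G F] by simp

lemma Nsub_add: "F \<in> Nsub I0 d0 z1 z2 z3 a b Fp \<Longrightarrow> G \<in> Nsub I0 d0 z1 z2 z3 a b Fp \<Longrightarrow> (\<lambda>m w. F m w + G m w) \<in> Nsub I0 d0 z1 z2 z3 a b Fp"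
  using Nsub_comb[of F I0 d0 z1 z2 z3 a b Fp G 1] by simp

lemma word_comm: "F \<in> Vsp a b Fp \<Longrightarrow>
  (\<lambda>m w. actV a b Fp e (actw s F) m w - (actw s (actV a b Fp e F) m w + fs (der e s) (\<lambda>s'. actw s' F m w))) \<in> Nsub I0 d0 z1 z2 z3 a b Fp"
proof (induction s)
  case Nil then show ?case by (simp add: Nsub_zero)
next
  case (Cons e1 s)
  define X where "X = actw s F"
  have XV: "X \<in> Vsp a b Fp" unfolding X_def by (rule actw_Vsp[OF Cons.prems])
  have D1: "(\<lambda>m w. actV a b Fp e (actV a b Fp e1 X) m w - actV a b Fp e1 (actV a b Fp e X) m w
      - fs (bl e e1) (\<lambda>z. actV a b Fp z X m w)) \<in> Nsub I0 d0 z1 z2 z3 a b Fp"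
    by (rule actV_comm[OF XV])
  have D2: "actV a b Fp e1 (\<lambda>m w. actV a b Fp e X m w - (actw s (actV a b Fp e F) m w + fs (der e s) (\<lambda>s'. actw s' F m w)))
      \<in> Nsub I0 d0 z1 z2 z3 a b Fp"
    by (rule actV_Nsub) (use Cons.IH[OF Cons.prems] in \<open>simp add: X_def\<close>)
  have E: "actV a b Fp e1 (\<lambda>m w. actV a b Fp e X m w - (actw s (actV a b Fp e F) m w + fs (der e s) (\<lambda>s'. actw s' F m w)))
     = (\<lambda>m w. actV a b Fp e1 (actV a b Fp e X) m w - (actV a b Fp e1 (actw s (actV a b Fp e F)) m w + fs (der e s) (\<lambda>s'. actV a b Fp e1 (actw s' F) m w)))"
    by (simp add: actV_diff actV_add actV_fs)
  have "(\<lambda>m w. actV a b Fp e (actw (e1 # s) F) m w - (actw (e1 # s) (actV a b Fp e F) m w + fs (der e (e1 # s)) (\<lambda>s'. actw s' F m w)))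
     = (\<lambda>m w. (actV a b Fp e (actV a b Fp e1 X) m w - actV a b Fp e1 (actV a b Fp e X) m w - fs (bl e e1) (\<lambda>z. actV a b Fp z X m w))
        + (actV a b Fp e1 (actV a b Fp e X) m w - (actV a b Fp e1 (actw s (actV a b Fp e F)) m w + fs (der e s) (\<lambda>s'. actV a b Fp e1 (actw s' F) m w))))"
    by (rule ext, rule ext) (simp add: der_Cons X_def del: map_map)
  then show ?case using Nsub_add[OF D1 D2[unfolded E]] by simp
qed

lemma LamV_vanish: "finite {m. y m \<noteq> 0} \<Longrightarrow> (\<forall>j<k. y j = 0) \<Longrightarrow> LamV (actw s (vt y)) = 0"
proof (induction "length s" arbitrary: s y rule: less_induct)
  case less
  note fy = less.prems(1) and yk = less.prems(2)
  have vV: "vt y \<in> Vsp a b Fp" by (rule vt_Vsp[OF fy])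
  show ?case
  proof (cases s)
    case Nil
    then show ?thesis using yk by (simp add: LamV_vt[OF fy] mk_def)
  next
    case (Cons e s')
    show ?thesis
    proof (cases "neg e")
      case True
      then show ?thesis using Cons LamV_neg actw_Vsp[OF vV] by simp
    next
      case False
      define y' where "y' = (\<lambda>j. chi e * y j + Am e y j)"
      have fy': "finite {m. y' m \<noteq> 0}"
      proof -
        have "{m. y' m \<noteq> 0} \<subseteq> {m. y m \<noteq> 0} \<union> (\<lambda>j. j + sh e) ` {m. y m \<noteq> 0}"
        proof
          fix m assume m: "m \<in> {m. y' m \<noteq> 0}"
          show "m \<in> {m. y m \<noteq> 0} \<union> (\<lambda>j. j + sh e) ` {m. y m \<noteq> 0}"
          proof (rule ccontr)
            assume "m \<notin> {m. y m \<noteq> 0} \<union> (\<lambda>j. j + sh e) ` {m. y m \<noteq> 0}"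
            then have y1: "y m = 0" and y2: "y (m - sh e) = 0" by (auto simp: image_iff)
            have "mk y (m - sh e) = 0" using y2 by (simp add: mk_def)
            then have "Am e y m = 0" by (simp add: Am_eq)
            then show False using m y1 by (simp add: y'_def)
          qed
        qed
        then show ?thesis using fy finite_subset by blast
      qed
      have she: "sh e \<ge> 0" using False by (cases e) auto
      have yk': "\<forall>j<k. y' j = 0"
      proof (intro allI impI)
        fix j assume "j < k"
        then have "y j = 0" "y (j - sh e) = 0" using yk she by auto
        then show "y' j = 0" by (simp add: y'_def Am_eq mk_def)
      qed
      have IH1: "LamV (actw s' (vt y')) = 0" using less(1)[OF _ fy' yk'] Cons by simp
      have IH2: "fs (der e s') (\<lambda>s''. LamV (actw s'' (vt y))) = 0"
      proof -
        have "fs (der e s') (\<lambda>s''. LamV (actw s'' (vt y))) = fs (der e s') (\<lambda>s''. 0)"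
          by (rule fs_cong, rule less(1)[OF _ fy yk]) (auto simp: Cons dest: der_len)
        then show ?thesis by simp
      qed
      have WC: "(\<lambda>m w. actV a b Fp e (actw s' (vt y)) m w - (actw s' (actV a b Fp e (vt y)) m w
          + fs (der e s') (\<lambda>s''. actw s'' (vt y) m w))) \<in> Nsub I0 d0 z1 z2 z3 a b Fp"
        by (rule word_comm[OF vV])
      have V1: "actV a b Fp e (actw s' (vt y)) \<in> Vsp a b Fp" by (intro actV_Vsp actw_Vsp vV)
      have V2: "(\<lambda>m w. actw s' (actV a b Fp e (vt y)) m w + fs (der e s') (\<lambda>s''. actw s'' (vt y) m w)) \<in> Vsp a b Fp"
        by (intro Vsp_add Vsp_fs actw_Vsp actV_Vsp vV)
      have L1: "LamV (actV a b Fp e (actw s' (vt y))) = LamV (\<lambda>m w. actw s' (actV a b Fp e (vt y)) m w + fs (der e s') (\<lambda>s''. actw s'' (vt y) m w))"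
        by (rule LamV_eqN[OF V1 V2 WC])
      have L2: "LamV (\<lambda>m w. actw s' (actV a b Fp e (vt y)) m w + fs (der e s') (\<lambda>s''. actw s'' (vt y) m w))
          = LamV (actw s' (actV a b Fp e (vt y))) + fs (der e s') (\<lambda>s''. LamV (actw s'' (vt y)))"
        using LamV_comb[OF actw_Vsp[OF actV_Vsp[OF vV]] Vsp_fs[OF actw_Vsp[OF vV]], of 1 s' e "der e s'"]
          LamV_fs[OF actw_Vsp[OF vV], of "der e s'"] by simp
      have L3: "LamV (actw s' (actV a b Fp e (vt y))) = LamV (actw s' (vt y'))"
      proof (rule LamV_eqN)
        show "actw s' (actV a b Fp e (vt y)) \<in> Vsp a b Fp" by (intro actw_Vsp actV_Vsp vV)
        show "actw s' (vt y') \<in> Vsp a b Fp" by (intro actw_Vsp vt_Vsp fy')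
        show "(\<lambda>m w. actw s' (actV a b Fp e (vt y)) m w - actw s' (vt y') m w) \<in> Nsub I0 d0 z1 z2 z3 a b Fp"
          using actw_Nsub[OF actV_vt[OF False fy], of s'] unfolding actw_diff y'_def by simp
      qed
      show ?thesis using Cons L1 L2 L3 IH1 IH2 by simp
    qed
  qed
qed

end


lemma qcl_self: "F \<in> Vsp a b Fp \<Longrightarrow> F \<in> qcl I0 d0 z1 z2 z3 a b Fp F"
  by (simp add: qcl_def Nsub_zero)

lemma qcl_mem: "G \<in> qcl I0 d0 z1 z2 z3 a b Fp F \<Longrightarrow> G \<in> Vsp a b Fp \<and> (\<lambda>m w. G m w - F m w) \<in> Nsub I0 d0 z1 z2 z3 a b Fp"
  by (simp add: qcl_def)

lemma qcl_some: "F \<in> Vsp a b Fp \<Longrightarrow> (SOME x. x \<in> qcl I0 d0 z1 z2 z3 a b Fp F) \<in> Vsp a b Fp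
   \<and> (\<lambda>m w. (SOME x. x \<in> qcl I0 d0 z1 z2 z3 a b Fp F) m w - F m w) \<in> Nsub I0 d0 z1 z2 z3 a b Fp"
proof -
  assume F: "F \<in> Vsp a b Fp"
  have "F \<in> qcl I0 d0 z1 z2 z3 a b Fp F" by (rule qcl_self[OF F])
  then have "(SOME x. x \<in> qcl I0 d0 z1 z2 z3 a b Fp F) \<in> qcl I0 d0 z1 z2 z3 a b Fp F"
    by (rule someI[where P="\<lambda>x. x \<in> qcl I0 d0 z1 z2 z3 a b Fp F"])
  then show ?thesis by (rule qcl_mem)
qed

context P begin

lemma actw_zero: "actw s (\<lambda>m w. 0) = (\<lambda>m w. 0)"
  by (induction s) (simp_all add: actV_eq)

lemma actw_scale: "actw s (\<lambda>m w. c * F m w) = (\<lambda>m w. c * actw s F m w)"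
  using actw_lin[of s c F "\<lambda>m w. 0"] by (simp add: actw_zero)

lemma LamV_scale: "F \<in> Vsp a b Fp \<Longrightarrow> LamV (\<lambda>m w. c * F m w) = c * LamV F"
  using LamV_comb[of F "\<lambda>m w. 0" c] Vsp_zero LamV_zero by simp

lemma LamV_rep: "F \<in> Vsp a b Fp \<Longrightarrow> LamV (actw s (SOME x. x \<in> qcl I0 d0 z1 z2 z3 a b Fp F)) = LamV (actw s F)"
proof -
  assume F: "F \<in> Vsp a b Fp"
  note r = qcl_some[OF F, of I0 d0 z1 z2 z3]
  show ?thesis
  proof (rule LamV_eqN)
    show "actw s (SOME x. x \<in> qcl I0 d0 z1 z2 z3 a b Fp F) \<in> Vsp a b Fp" by (rule actw_Vsp[OF conjunct1[OF r]])
    show "actw s F \<in> Vsp a b Fp" by (rule actw_Vsp[OF F])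
    show "(\<lambda>m w. actw s (SOME x. x \<in> qcl I0 d0 z1 z2 z3 a b Fp F) m w - actw s F m w) \<in> Nsub I0 d0 z1 z2 z3 a b Fp"
      using actw_Nsub[OF conjunct2[OF r], of s] unfolding actw_diff .
  qed
qed

end

theorem lemma17:
  fixes I0 d0 z1 z2 z3 a b F :: complex
  shows "\<not> simple_mod (Wcar I0 d0 z1 z2 z3 a b F) (Wzero I0 d0 z1 z2 z3 a b F)
            (Wadd I0 d0 z1 z2 z3 a b F) (Wscale I0 d0 z1 z2 z3 a b F)
            (Wact I0 d0 z1 z2 z3 a b F)"
proof
  assume sm: "simple_mod (Wcar I0 d0 z1 z2 z3 a b F) (Wzero I0 d0 z1 z2 z3 a b F)
            (Wadd I0 d0 z1 z2 z3 a b F) (Wscale I0 d0 z1 z2 z3 a b F)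
            (Wact I0 d0 z1 z2 z3 a b F)"
  obtain k where k: "k \<in> Sset a b F" "k - 1 \<in> Sset a b F"
    using P.Sset_cases[of a b F]
  proof
    assume "Sset a b F = UNIV" then show ?thesis using that[of 1] by simp
  next
    assume "\<exists>p. a = of_int p \<and> (b = 0 \<or> b = 1) \<and> F = 0 \<and> Sset a b F = {m. m \<noteq> - p}"
    then obtain p where "Sset a b F = {m. m \<noteq> - p}" by blast
    then show ?thesis using that[of "- p + 2"] by simp
  qed
  interpret P1: P I0 d0 z1 z2 z3 a b F k .
  interpret P2: P I0 d0 z1 z2 z3 a b F "k + 1" .
  let ?C = "Wcar I0 d0 z1 z2 z3 a b F"
  let ?z = "Wzero I0 d0 z1 z2 z3 a b F"
  let ?q = "qcl I0 d0 z1 z2 z3 a b F"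
  let ?r = "\<lambda>X. SOME x. x \<in> X"
  define U where "U = {X \<in> ?C. \<forall>s. P1.LamV (P1.actw s (?r X)) = 0}"
  have C_iff: "X \<in> ?C \<longleftrightarrow> (\<exists>G\<in>Vsp a b F. X = ?q G)" for X by (auto simp: Wcar_def)
  have rep: "?r (?q G) \<in> Vsp a b F" if "G \<in> Vsp a b F" for G using qcl_some[OF that] by blast
  have sub: "submod ?C ?z (Wadd I0 d0 z1 z2 z3 a b F) (Wscale I0 d0 z1 z2 z3 a b F) (Wact I0 d0 z1 z2 z3 a b F) U"
    unfolding submod_def
  proof (intro conjI ballI allI)
    show "U \<subseteq> ?C" by (auto simp: U_def)
    show "?z \<in> U"
    proof -
      have "?z \<in> ?C" using Vsp_zero by (auto simp: Wzero_def Wcar_def)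
      moreover have "P1.LamV (P1.actw s (?r ?z)) = 0" for s
        unfolding Wzero_def P1.LamV_rep[OF Vsp_zero]
        by (rule P1.LamV_Nsub, rule P1.actw_Nsub, rule Nsub_zero)
      ultimately show ?thesis by (simp add: U_def)
    qed
  next
    fix X Y assume X: "X \<in> U" and Y: "Y \<in> U"
    obtain G where G: "G \<in> Vsp a b F" "X = ?q G" using X C_iff by (auto simp: U_def)
    obtain G' where G': "G' \<in> Vsp a b F" "Y = ?q G'" using Y C_iff by (auto simp: U_def)
    have S: "(\<lambda>m w. ?r X m w + ?r Y m w) \<in> Vsp a b F" using rep G G' by (simp add: Vsp_add)
    show "Wadd I0 d0 z1 z2 z3 a b F X Y \<in> U"
    proof -
      have "Wadd I0 d0 z1 z2 z3 a b F X Y \<in> ?C" using S by (auto simp: Wadd_def Wcar_def)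
      moreover have "P1.LamV (P1.actw s (?r (Wadd I0 d0 z1 z2 z3 a b F X Y))) = 0" for s
      proof -
        have "P1.LamV (P1.actw s (?r (Wadd I0 d0 z1 z2 z3 a b F X Y))) = P1.LamV (P1.actw s (\<lambda>m w. ?r X m w + ?r Y m w))"
          unfolding Wadd_def by (rule P1.LamV_rep[OF S])
        also have "\<dots> = P1.LamV (P1.actw s (?r X)) + P1.LamV (P1.actw s (?r Y))"
          using P1.actw_lin[of s 1 "?r X" "?r Y"] P1.LamV_comb[of "P1.actw s (?r X)" "P1.actw s (?r Y)" 1]
            P1.actw_Vsp rep G G' by simp
        also have "\<dots> = 0" using X Y by (simp add: U_def)
        finally show ?thesis .
      qed
      ultimately show ?thesis by (simp add: U_def)
    qed
  next
    fix c X assume X: "X \<in> U"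
    obtain G where G: "G \<in> Vsp a b F" "X = ?q G" using X C_iff by (auto simp: U_def)
    have S: "(\<lambda>m w. c * ?r X m w) \<in> Vsp a b F" using rep G by (simp add: Vsp_scale)
    show "Wscale I0 d0 z1 z2 z3 a b F c X \<in> U"
    proof -
      have "Wscale I0 d0 z1 z2 z3 a b F c X \<in> ?C" using S by (auto simp: Wscale_def Wcar_def)
      moreover have "P1.LamV (P1.actw s (?r (Wscale I0 d0 z1 z2 z3 a b F c X))) = 0" for s
      proof -
        have "P1.LamV (P1.actw s (?r (Wscale I0 d0 z1 z2 z3 a b F c X))) = P1.LamV (P1.actw s (\<lambda>m w. c * ?r X m w))"
          unfolding Wscale_def by (rule P1.LamV_rep[OF S])
        also have "\<dots> = c * P1.LamV (P1.actw s (?r X))"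
          using P1.actw_Vsp[OF rep[OF G(1)], of s] G(2) by (simp add: P1.actw_scale P1.LamV_scale)
        also have "\<dots> = 0" using X by (simp add: U_def)
        finally show ?thesis .
      qed
      ultimately show ?thesis by (simp add: U_def)
    qed
  next
    fix e X assume X: "X \<in> U"
    obtain G where G: "G \<in> Vsp a b F" "X = ?q G" using X C_iff by (auto simp: U_def)
    have S: "actV a b F e (?r X) \<in> Vsp a b F" using rep G by (simp add: P1.actV_Vsp)
    show "Wact I0 d0 z1 z2 z3 a b F e X \<in> U"
    proof -
      have "Wact I0 d0 z1 z2 z3 a b F e X \<in> ?C" using S by (auto simp: Wact_def Wcar_def)
      moreover have "P1.LamV (P1.actw s (?r (Wact I0 d0 z1 z2 z3 a b F e X))) = 0" for s
      proof -
        have "P1.LamV (P1.actw s (?r (Wact I0 d0 z1 z2 z3 a b F e X))) = P1.LamV (P1.actw s (actV a b F e (?r X)))"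
          unfolding Wact_def by (rule P1.LamV_rep[OF S])
        also have "\<dots> = P1.LamV (P1.actw (s @ [e]) (?r X))" by (simp add: P1.actw_snoc)
        also have "\<dots> = 0" using X by (simp add: U_def)
        finally show ?thesis .
      qed
      ultimately show ?thesis by (simp add: U_def)
    qed
  qed
  have fin1: "finite {m. P1.dl j m \<noteq> 0}" for j by (simp add: P1.dl_def)
  have vtV: "P1.vt (P1.dl j) \<in> Vsp a b F" for j by (rule P1.vt_Vsp[OF fin1])
  define X0 where "X0 = ?q (P1.vt (P1.dl k))"
  have X0U: "X0 \<in> U"
  proof -
    have "X0 \<in> ?C" using vtV by (auto simp: X0_def Wcar_def)
    moreover have "P1.LamV (P1.actw s (?r X0)) = 0" for s
      unfolding X0_def P1.LamV_rep[OF vtV]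
      by (rule P1.LamV_vanish[OF fin1]) (simp add: P1.dl_def)
    ultimately show ?thesis by (simp add: U_def)
  qed
  have X0z: "X0 \<noteq> ?z"
  proof
    assume "X0 = ?z"
    moreover have h: "P1.vt (P1.dl k) \<in> ?q (P1.vt (P1.dl k))" by (rule qcl_self[OF vtV])
    ultimately have "P1.vt (P1.dl k) \<in> ?q (\<lambda>m w. 0)" by (simp add: X0_def Wzero_def)
    then have "(\<lambda>m w. P1.vt (P1.dl k) m w - 0) \<in> Nsub I0 d0 z1 z2 z3 a b F" using qcl_mem by blast
    then have "P2.LamV (P1.vt (P1.dl k)) = 0" using P2.LamV_Nsub by simp
    moreover have "P1.vt (P1.dl k) = P2.vt (P1.dl k)" by (simp add: P1.vt_def P2.vt_def P1.mk_def P2.mk_def)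
    moreover have "P2.LamV (P2.vt (P1.dl k)) = 1" using P2.LamV_vt[OF fin1] k by (simp add: P2.mk_def P1.dl_def)
    ultimately show False by simp
  qed
  define Y0 where "Y0 = ?q (P1.vt (P1.dl (k - 1)))"
  have Y0C: "Y0 \<in> ?C" using vtV by (auto simp: Y0_def Wcar_def)
  have Y0U: "Y0 \<notin> U"
  proof
    assume "Y0 \<in> U"
    then have "\<forall>s. P1.LamV (P1.actw s (?r Y0)) = 0" unfolding U_def by blast
    then have "P1.LamV (P1.actw [] (?r Y0)) = 0" by (rule spec)
    moreover have "P1.LamV (P1.actw [] (?r Y0)) = P1.LamV (P1.vt (P1.dl (k - 1)))"
      unfolding Y0_def P1.LamV_rep[OF vtV] by simp
    moreover have "P1.LamV (P1.vt (P1.dl (k - 1))) = 1" using P1.LamV_vt[OF fin1] k by (simp add: P1.mk_def P1.dl_def)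
    ultimately show False by simp
  qed
  from sm sub have "U = {?z} \<or> U = ?C" by (simp add: simple_mod_def)
  then show False using X0U X0z Y0C Y0U by auto
qed


end
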